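(* Let $C$ be a connected $n$-dimensional unoriented resolution configuration which is neither a tree nor a dual tree. Then any associated map $F_C:V_0(C)\to V_1(C)$ of bidegree $(n,p)$ with $p\geq 2n$ satisfying the filtration rule, the duality rule and the naturality rule must be equal to zero.
   Context: An $n$-dimensional resolution configuration $C$ is a finite set of pairwise disjoint embedded circles in $S^2$ (the starting circles) together with $n$ pairwise disjoint embedded arcs whose endpoints lie on the circles and whose interiors are disjoint from the circles; unoriented means the arcs carry no orientation. The ending circles are obtained by surgery along all arcs. The dual configuration $C^*$ consists of the ending circles with dual arcs obtained by rotating each arc $90$ degrees counterclockwise; the mirror $m(C)$ is the reflection of $C$ in $\mathbb{R}\times\{0\}\subset\mathbb{R}^2\cup\{\infty\}=S^2$. $C$ is connected if the graph with vertices the circles and edges the arcs is connected. A connected $n$-dimensional configuration is a tree if it has exactly $n+1$ starting circles and one ending circle; a dual tree is the dual of a tree. $V_0(C)=\bigotimes_i\mathbb{F}_2[x_i]/(x_i^2)$ over starting circles $x_i$, $V_1(C)=\bigotimes_j\mathbb{F}_2[y_j]/(y_j^2)$ over ending circles $y_j$, with bases of monomials. Quantum grading: in each factor $\mathrm{gr}_q(1)=1$, $\mathrm{gr}_q(z)=-1$, summed over factors, and for an $n$-dimensional configuration monomials of $V_1(C)$ get an extra shift of $+n$. A linear map $F_C$ has bidegree $(n,p)$ if it sends each monomial to a combination of monomials with quantum grading larger by $p$. Rules: (Naturality) if an orientation-preserving diffeomorphism of $S^2$ sends $C$ to $C'$, then $F_C=F_{C'}$ under the induced identifications. (Duality) with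 canonical identifications $V_0(m(C^* ))=V_1(C)$, $V_1(m(C^* ))=V_0(C)$, and $a\mapsto a^*$ the map on monomials induced by $1^*=z$, $z^*=1$ in each factor, the coefficient of $b$ in $F_C(a)$ equals the coefficient of $a^*$ in $F_{m(C^* )}(b^* )$ for all monomials $a\in V_0(C)$, $b\in V_1(C)$. (Filtration) for a point $P$ on the starting circles, with $x(P)$, $y(P)$ the starting and ending circles containing $P$: if monomial $a$ is divisible by $x(P)$ and the coefficient of monomial $b$ in $F_C(a)$ is non-zero, then $y(P)$ divides $b$. *)

theory Defs
  imports Main "HOL-Library.Z2"
begin

text \<open>
Combinatorial model of a connected unoriented resolution configuration in S^2.  The graph formed by the starting circles and the arcs is a
connected graph embedded in the oriented sphere; its vertices are the arc
endpoints (each of valence 3: one arc half-edge, two circle half-edges).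
Up to orientation preserving diffeomorphism of S^2 such an embedded graph is
the same as a genus 0 combinatorial map (rotation system):
  darts : half-edges,
  alph  : fixed-point free involution pairing the two halves of an edge,
  sig   : counterclockwise successor of a dart around its vertex,
  arcs  : the darts that are halves of arcs.
\<close>

record 'd rconf =
  darts :: "'d set"
  alph  :: "'d \<Rightarrow> 'd"
  sig   :: "'d \<Rightarrow> 'd"
  arcs  :: "'d set"

definition orbit :: "('d \<Rightarrow> 'd) \<Rightarrow> 'd \<Rightarrow> 'd set" where
  "orbit f d = {(f ^^ k) d | k. True}"

definition conn_config :: "'d rconf \<Rightarrow> bool" where
  "conn_config C \<longleftrightarrow>
     finite (darts C) \<and> darts C \<noteq> {} \<and>
     (\<forall>d\<in>darts C. alph C d \<in> darts C \<and> alph C d \<noteq> d \<and> alph C (alph C d) = d) \<and>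
     bij_betw (sig C) (darts C) (darts C) \<and>
     (\<forall>d\<in>darts C. sig C d \<noteq> d \<and> sig C (sig C (sig C d)) = d) \<and>
     arcs C \<subseteq> darts C \<and>
     (\<forall>d\<in>arcs C. alph C d \<in> arcs C) \<and>
     (\<forall>d\<in>darts C. card ({d, sig C d, sig C (sig C d)} \<inter> arcs C) = 1) \<and>
     \<comment> \<open>connected\<close>
     (\<forall>d\<in>darts C. \<forall>e\<in>darts C.
        (d, e) \<in> ({(x, alph C x) | x. x \<in> darts C} \<union> {(x, sig C x) | x. x \<in> darts C})\<^sup>*) \<and>
     \<comment> \<open>planar (genus 0): V - E + F = 2\<close>
     int (card {orbit (sig C) d | d. d \<in> darts C})
       - int (card {{d, alph C d} | d. d \<in> darts C})
       + int (card {orbit (sig C \<circ> alph C) d | d. d \<in> darts C}) = 2"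

definition dim :: "'d rconf \<Rightarrow> nat" where
  "dim C = card {{d, alph C d} | d. d \<in> arcs C}"

text \<open>Circle darts: the other circle dart at the same vertex (circle continues).\<close>
definition other :: "'d rconf \<Rightarrow> 'd \<Rightarrow> 'd" where
  "other C d = (if sig C d \<in> arcs C then sig C (sig C d) else sig C d)"

text \<open>After surgery along the arc at the vertex of d, the curve leaving the
  vertex through d continues along the side of the band into the circle dart
  at the other endpoint of the arc.\<close>
definition surg :: "'d rconf \<Rightarrow> 'd \<Rightarrow> 'd" where
  "surg C d = (if sig C (sig C d) \<in> arcs C
                then sig C (sig C (alph C (sig C (sig C d))))
                else sig C (alph C (sig C d)))"

definition circ_darts :: "'d rconf \<Rightarrow> 'd set" where
  "circ_darts C = darts C - arcs C"

text \<open>Starting circles, represented as the sets of circle darts lying on them.\<close>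
definition start_circ :: "'d rconf \<Rightarrow> 'd \<Rightarrow> 'd set" where
  "start_circ C d = {e. (d, e) \<in> ({(x, alph C x) | x. x \<in> circ_darts C}
                                 \<union> {(x, other C x) | x. x \<in> circ_darts C})\<^sup>*}"

definition end_circ :: "'d rconf \<Rightarrow> 'd \<Rightarrow> 'd set" where
  "end_circ C d = {e. (d, e) \<in> ({(x, alph C x) | x. x \<in> circ_darts C}
                               \<union> {(x, surg C x) | x. x \<in> circ_darts C})\<^sup>*}"

definition starts :: "'d rconf \<Rightarrow> 'd set set" where
  "starts C = start_circ C ` circ_darts C"

definition ends :: "'d rconf \<Rightarrow> 'd set set" where
  "ends C = end_circ C ` circ_darts C"

definition is_tree :: "'d rconf \<Rightarrow> bool" where
  "is_tree C \<longleftrightarrow> conn_config C \<and> card (starts C) = dim C + 1 \<and> card (ends C) = 1"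

text \<open>Dual configuration C^*: same darts; the dual arc of an arc crosses its
  band; circle darts of C^* are identified with those of C (each circle edge of C
  becomes a circle edge of C^*), the dual arc dart lying on the side of the band
  adjacent to sig a is identified with a.  Then the starting (ending) circles of
  C^* are literally the ending (starting) circles of C.\<close>
definition dual :: "'d rconf \<Rightarrow> 'd rconf" where
  "dual C = C\<lparr> sig := (\<lambda>d. if d \<in> arcs C then sig C (sig C (alph C d))
                          else if sig C (sig C d) \<in> arcs C then sig C (sig C d)
                          else sig C (alph C (sig C d))) \<rparr>"

text \<open>Mirror image: reflection reverses the cyclic orders at vertices.\<close>
definition mirror :: "'d rconf \<Rightarrow> 'd rconf" where
  "mirror C = C\<lparr> sig := (\<lambda>d. sig C (sig C d)) \<rparr>"

text \<open>Isomorphism = orientation preserving diffeomorphism of S^2 carrying one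
  configuration to the other.\<close>
definition conf_iso :: "('d \<Rightarrow> 'd) \<Rightarrow> 'd rconf \<Rightarrow> 'd rconf \<Rightarrow> bool" where
  "conf_iso \<phi> C C' \<longleftrightarrow> bij_betw \<phi> (darts C) (darts C') \<and>
     (\<forall>d\<in>darts C. \<phi> (alph C d) = alph C' (\<phi> d) \<and> \<phi> (sig C d) = sig C' (\<phi> d)
                   \<and> (d \<in> arcs C \<longleftrightarrow> \<phi> d \<in> arcs C'))"

definition is_dual_tree :: "'d rconf \<Rightarrow> bool" where
  "is_dual_tree C \<longleftrightarrow> (\<exists>T \<phi>. is_tree T \<and> conf_iso \<phi> (dual T) C)"

text \<open>A map F_C : V_0(C) \<rightarrow> V_1(C) over F_2 is given by its matrix in the monomial
  bases; monomials are identified with sets of circles.  F C a b is the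
  coefficient of monomial b in F_C(a).\<close>
type_synonym 'd family = "'d rconf \<Rightarrow> 'd set set \<Rightarrow> 'd set set \<Rightarrow> bit"

definition gr0 :: "'d rconf \<Rightarrow> 'd set set \<Rightarrow> int" where
  "gr0 C a = int (card (starts C)) - 2 * int (card a)"

definition gr1 :: "'d rconf \<Rightarrow> 'd set set \<Rightarrow> int" where
  "gr1 C b = int (card (ends C)) - 2 * int (card b) + int (dim C)"

definition has_bidegree :: "'d family \<Rightarrow> 'd rconf \<Rightarrow> int \<Rightarrow> bool" where
  "has_bidegree F C p \<longleftrightarrow> (\<forall>a b. a \<subseteq> starts C \<longrightarrow> b \<subseteq> ends C \<longrightarrow>
      F C a b \<noteq> 0 \<longrightarrow> gr1 C b = gr0 C a + p)"

definition naturality_rule :: "'d family \<Rightarrow> bool" where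
  "naturality_rule F \<longleftrightarrow> (\<forall>C C' \<phi>. conn_config C \<longrightarrow> conn_config C' \<longrightarrow> conf_iso \<phi> C C' \<longrightarrow>
     (\<forall>a b. a \<subseteq> starts C \<longrightarrow> b \<subseteq> ends C \<longrightarrow>
        F C a b = F C' ((\<lambda>S. \<phi> ` S) ` a) ((\<lambda>S. \<phi> ` S) ` b)))"

definition duality_rule :: "'d family \<Rightarrow> bool" where
  "duality_rule F \<longleftrightarrow> (\<forall>C. conn_config C \<longrightarrow>
     (\<forall>a b. a \<subseteq> starts C \<longrightarrow> b \<subseteq> ends C \<longrightarrow>
        F C a b = F (mirror (dual C)) (ends C - b) (starts C - a)))"

text \<open>Points P on starting circles away from the arc feet lie on circle edges,
  i.e. are given by a circle dart d; then x(P) = start_circ C d, y(P) = end_circ C d.\<close>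
definition filtration_rule :: "'d family \<Rightarrow> bool" where
  "filtration_rule F \<longleftrightarrow> (\<forall>C. conn_config C \<longrightarrow> (\<forall>d\<in>circ_darts C.
     \<forall>a b. a \<subseteq> starts C \<longrightarrow> b \<subseteq> ends C \<longrightarrow>
        start_circ C d \<in> a \<longrightarrow> F C a b \<noteq> 0 \<longrightarrow> end_circ C d \<in> b))"

end

theory Submission
  imports Defs
begin

definition ncomp :: "'a set \<Rightarrow> ('a \<times> 'a) set \<Rightarrow> nat" where
  "ncomp S Q = card ((\<lambda>x. {y. (x,y) \<in> Q\<^sup>*}) ` S)"

lemma rtrancl_add_edge:
  assumes "sym Q" "(x,y) \<in> (Q \<union> {(u,v),(v,u)})\<^sup>*"
  shows "(x,y) \<in> Q\<^sup>* \<or> ((x,u) \<in> Q\<^sup>* \<and> (v,y) \<in> Q\<^sup>*) \<or> ((x,v) \<in> Q\<^sup>* \<and> (u,y) \<in> Q\<^sup>*)"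
  using assms(2)
proof (induction rule: rtrancl_induct)
  case base then show ?case by simp
next
  case (step y z)
  have s: "sym (Q\<^sup>*)" using assms(1) sym_rtrancl by blast
  from step.hyps(2) consider "(y,z) \<in> Q" | "y = u" "z = v" | "y = v" "z = u" by blast
  then show ?case
  proof cases
    case 1 then show ?thesis using step.IH by (meson rtrancl.rtrancl_into_rtrancl)
  next
    case 2 then show ?thesis using step.IH s by (meson rtrancl.rtrancl_refl rtrancl_trans symD)
  next
    case 3 then show ?thesis using step.IH s by (meson rtrancl.rtrancl_refl rtrancl_trans symD)
  qed
qed

lemma rtrancl_add_edge_same0:
  assumes "(u,v) \<in> Q\<^sup>*" "(v,u) \<in> Q\<^sup>*" "(x,y) \<in> (Q \<union> {(u,v),(v,u)})\<^sup>*"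
  shows "(x,y) \<in> Q\<^sup>*"
  using assms(3)
  by (induction rule: rtrancl_induct) (use assms in \<open>auto intro: rtrancl_trans\<close>)

lemma rtrancl_add_edge_same:
  assumes "(u,v) \<in> Q\<^sup>*" "(v,u) \<in> Q\<^sup>*"
  shows "(Q \<union> {(u,v),(v,u)})\<^sup>* = Q\<^sup>*"
proof
  show "(Q \<union> {(u,v),(v,u)})\<^sup>* \<subseteq> Q\<^sup>*"
    using rtrancl_add_edge_same0[OF assms] by auto
next
  show "Q\<^sup>* \<subseteq> (Q \<union> {(u,v),(v,u)})\<^sup>*" by (rule rtrancl_mono) auto
qed

lemma ncomp_add:
  assumes fin: "finite S" and sy: "sym Q" and uS: "u \<in> S" and vS: "v \<in> S"
  shows "ncomp S (Q \<union> {(u,v),(v,u)}) + (if (u,v) \<in> Q\<^sup>* then 0 else 1) = ncomp S Q"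
proof -
  define cls where "cls x = {y. (x,y) \<in> Q\<^sup>*}" for x
  define Q' where "Q' = Q \<union> {(u,v),(v,u)}"
  define U where "U = cls u \<union> cls v"
  have s: "sym (Q\<^sup>*)" using sy sym_rtrancl by blast
  have symQ: "(x,y) \<in> Q\<^sup>* \<Longrightarrow> (y,x) \<in> Q\<^sup>*" for x y using s by (meson symD)
  have clseq: "(x,y) \<in> Q\<^sup>* \<Longrightarrow> cls x = cls y" for x y
    unfolding cls_def using symQ by (blast intro: rtrancl_trans)
  have inU: "x \<in> U \<longleftrightarrow> (u,x) \<in> Q\<^sup>* \<or> (v,x) \<in> Q\<^sup>*" for x unfolding U_def cls_def by auto
  have cls': "{y. (x,y) \<in> Q'\<^sup>*} = (if x \<in> U then U else cls x)" for x
  proof -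
    have sub: "Q\<^sup>* \<subseteq> Q'\<^sup>*" unfolding Q'_def by (rule rtrancl_mono) auto
    have uv: "(u,v) \<in> Q'\<^sup>*" "(v,u) \<in> Q'\<^sup>*" unfolding Q'_def by auto
    have char: "(x,y) \<in> Q'\<^sup>* \<longleftrightarrow> (x,y) \<in> Q\<^sup>* \<or> ((x,u) \<in> Q\<^sup>* \<and> (v,y) \<in> Q\<^sup>*) \<or> ((x,v) \<in> Q\<^sup>* \<and> (u,y) \<in> Q\<^sup>*)" for y
    proof
      assume "(x,y) \<in> Q'\<^sup>*" then show "(x,y) \<in> Q\<^sup>* \<or> ((x,u) \<in> Q\<^sup>* \<and> (v,y) \<in> Q\<^sup>*) \<or> ((x,v) \<in> Q\<^sup>* \<and> (u,y) \<in> Q\<^sup>*)"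
        using rtrancl_add_edge[OF sy] unfolding Q'_def by blast
    next
      assume "(x,y) \<in> Q\<^sup>* \<or> ((x,u) \<in> Q\<^sup>* \<and> (v,y) \<in> Q\<^sup>*) \<or> ((x,v) \<in> Q\<^sup>* \<and> (u,y) \<in> Q\<^sup>*)"
      then show "(x,y) \<in> Q'\<^sup>*" using sub uv by (blast intro: rtrancl_trans)
    qed
    show ?thesis
    proof (cases "x \<in> U")
      case True
      then have xuv: "(x,u) \<in> Q\<^sup>* \<or> (x,v) \<in> Q\<^sup>*" using inU symQ by blast
      have "y \<in> {y. (x,y) \<in> Q'\<^sup>*} \<longleftrightarrow> y \<in> U" for y
        unfolding inU mem_Collect_eq char using xuv symQ rtrancl_trans by metis
      then show ?thesis using True by (simp add: set_eq_iff)
    next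
      case False
      then have "(x,u) \<notin> Q\<^sup>*" "(x,v) \<notin> Q\<^sup>*" using inU symQ by blast+
      then show ?thesis using False char unfolding cls_def by auto
    qed
  qed
  have img': "(\<lambda>x. {y. (x,y) \<in> Q'\<^sup>*}) ` S = cls ` (S - U) \<union> {U}"
  proof -
    have "u \<in> U" unfolding U_def cls_def by simp
    then have "(\<lambda>x. {y. (x,y) \<in> Q'\<^sup>*}) ` S = (\<lambda>x. if x \<in> U then U else cls x) ` S"
      using cls' by simp
    also have "\<dots> = cls ` (S - U) \<union> {U}" using \<open>u \<in> U\<close> uS by force
    finally show ?thesis .
  qed
  have img: "cls ` S = cls ` (S - U) \<union> {cls u, cls v}"
  proof -
    have "x \<in> U \<Longrightarrow> cls x = cls u \<or> cls x = cls v" for x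
      using inU clseq symQ by blast
    moreover have "u \<in> S - (S - U)" "v \<in> S - (S - U)" using uS vS unfolding U_def cls_def by auto
    ultimately show ?thesis by auto
  qed
  have selfin: "x \<in> cls x" for x unfolding cls_def by simp
  have d1: "cls ` (S - U) \<inter> {U} = {}"
  proof -
    have "x \<notin> U \<Longrightarrow> cls x \<noteq> U" for x
    proof
      assume "x \<notin> U" "cls x = U"
      then have "u \<in> cls x" unfolding U_def cls_def by auto
      then show False using \<open>x \<notin> U\<close> inU symQ unfolding cls_def by auto
    qed
    then show ?thesis by auto
  qed
  have d2: "cls ` (S - U) \<inter> {cls u, cls v} = {}"
  proof -
    have "x \<notin> U \<Longrightarrow> cls x \<noteq> cls u \<and> cls x \<noteq> cls v" for x
      using selfin unfolding U_def by blast
    then show ?thesis by auto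
  qed
  have c2: "card {cls u, cls v} = (if (u,v) \<in> Q\<^sup>* then 1 else 2)"
  proof (cases "(u,v) \<in> Q\<^sup>*")
    case True then show ?thesis using clseq by simp
  next
    case False
    then have "cls u \<noteq> cls v" using selfin unfolding cls_def by blast
    then show ?thesis using False by simp
  qed
  have "ncomp S Q' = card (cls ` (S - U)) + 1"
    unfolding ncomp_def img' using d1 fin by (simp add: card_Un_disjoint)
  moreover have "ncomp S Q = card (cls ` (S - U)) + card {cls u, cls v}"
  proof -
    have e: "(\<lambda>x. {y. (x,y) \<in> Q\<^sup>*}) = cls" by (simp add: cls_def fun_eq_iff)
    have "ncomp S Q = card (cls ` S)" unfolding ncomp_def e ..
    also have "\<dots> = card (cls ` (S - U) \<union> {cls u, cls v})" using img by simp
    also have "\<dots> = card (cls ` (S - U)) + card {cls u, cls v}"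
      by (rule card_Un_disjoint) (use fin d2 in auto)
    finally show ?thesis .
  qed
  ultimately show ?thesis using c2 unfolding Q'_def by auto
qed

lemma funpow_in: "f ` S \<subseteq> S \<Longrightarrow> x \<in> S \<Longrightarrow> (f^^k) x \<in> S"
  by (induction k) auto

lemma perm_return:
  assumes fin: "finite S" and bij: "bij_betw f S S" and x: "x \<in> S"
  shows "\<exists>k>0. (f^^k) x = x"
proof -
  have sub: "f ` S \<subseteq> S" using bij bij_betw_imp_surj_on by blast
  let ?g = "\<lambda>k. (f^^k) x"
  have "?g ` {..card S} \<subseteq> S" using funpow_in[OF sub x] by auto
  then have "card (?g ` {..card S}) \<le> card S" using fin card_mono by blast
  then have "card (?g ` {..card S}) < card {..card S}" by simp
  then have "\<not> inj_on ?g {..card S}" using pigeonhole by blast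
  then obtain i j where ij: "i \<le> card S" "j \<le> card S" "i \<noteq> j" "?g i = ?g j"
    unfolding inj_on_def by blast
  then obtain i j where ij: "i < j" "?g i = ?g j" by (metis linorder_neqE_nat)
  have bi: "bij_betw (f^^i) S S" using bij_betw_funpow[OF bij] .
  have "(f^^j) x = (f^^i) ((f^^(j-i)) x)"
    using ij(1) by (metis funpow_add le_add_diff_inverse less_imp_le o_apply)
  then have "(f^^i) x = (f^^i) ((f^^(j-i)) x)" using ij by simp
  moreover have "(f^^(j-i)) x \<in> S" using funpow_in[OF sub x] .
  ultimately have "x = (f^^(j-i)) x" using bi x unfolding bij_betw_def inj_on_def by blast
  then show ?thesis using ij(1) by (intro exI[of _ "j-i"]) auto
qed

lemma no_bridge:
  fixes \<alpha> \<tau> :: "'a \<Rightarrow> 'a"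
  assumes fin: "finite S"
    and a: "\<forall>x\<in>S. \<alpha> x \<in> S \<and> \<alpha> (\<alpha> x) = x \<and> \<alpha> x \<noteq> x"
    and t: "\<forall>x\<in>S. \<tau> x \<in> S \<and> \<tau> (\<tau> x) = x \<and> \<tau> x \<noteq> x"
    and x0: "x0 \<in> S"
  shows "(x0, \<tau> x0) \<in> ({(x, \<alpha> x) | x. x \<in> S} \<union> {(x, \<tau> x) | x. x \<in> S - {x0, \<tau> x0}})\<^sup>*"
proof -
  define B where "B = {(x, \<alpha> x) | x. x \<in> S} \<union> {(x, \<tau> x) | x. x \<in> S - {x0, \<tau> x0}}"
  define \<pi> where "\<pi> = \<tau> \<circ> \<alpha>"
  define \<rho> where "\<rho> = \<alpha> \<circ> \<tau>"
  have piS: "\<pi> ` S \<subseteq> S" using a t unfolding \<pi>_def by auto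
  have rhopi: "\<rho> (\<pi> y) = y" if "y \<in> S" for y using a t that unfolding \<pi>_def \<rho>_def by auto
  have pirho: "\<pi> (\<rho> y) = y" if "y \<in> S" for y using a t that unfolding \<pi>_def \<rho>_def by auto
  have inj: "inj_on \<pi> S" using rhopi by (metis inj_onI)
  have bij: "bij_betw \<pi> S S"
  proof -
    have "S \<subseteq> \<pi> ` S"
    proof
      fix y assume "y \<in> S"
      then have "\<rho> y \<in> S" using a t unfolding \<rho>_def by auto
      then show "y \<in> \<pi> ` S" using pirho \<open>y \<in> S\<close> by force
    qed
    then show ?thesis using inj piS unfolding bij_betw_def by blast
  qed
  have pin: "(\<pi>^^i) y \<in> S" if "y \<in> S" for i y using funpow_in[OF piS that] .
  have rp: "(\<rho>^^i) ((\<pi>^^i) y) = y" if "y \<in> S" for i y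
    using that
  proof (induction i arbitrary: y)
    case 0 then show ?case by simp
  next
    case (Suc i)
    have "(\<rho>^^Suc i) ((\<pi>^^Suc i) y) = (\<rho>^^i) (\<rho> (\<pi> ((\<pi>^^i) y)))"
      by (simp add: funpow_swap1)
    also have "\<dots> = (\<rho>^^i) ((\<pi>^^i) y)" using rhopi pin Suc.prems by simp
    finally show ?case using Suc by simp
  qed
  have ap: "\<alpha> ((\<pi>^^i) y) = (\<rho>^^i) (\<alpha> y)" if "y \<in> S" for i y
  proof (induction i)
    case 0 then show ?case by simp
  next
    case (Suc i)
    have "\<alpha> ((\<pi>^^Suc i) y) = \<alpha> (\<tau> (\<alpha> ((\<pi>^^i) y)))" by (simp add: \<pi>_def)
    also have "\<dots> = \<rho> (\<alpha> ((\<pi>^^i) y))" using a pin[OF that] by (simp add: \<rho>_def)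
    finally show ?case using Suc by simp
  qed
  have noalpha: "(\<pi>^^j) y \<noteq> \<alpha> y" if y: "y \<in> S" for j y
  proof
    assume eq: "(\<pi>^^j) y = \<alpha> y"
    obtain i where "j = 2*i \<or> j = 2*i+1" by (metis dvd_mult_div_cancel odd_two_times_div_two_succ)
    then show False
    proof
      assume j: "j = 2*i"
      have "(\<pi>^^j) y = (\<pi>^^i) ((\<pi>^^i) y)" unfolding j by (simp add: funpow_add mult_2)
      then have "(\<rho>^^i) ((\<pi>^^j) y) = (\<pi>^^i) y" using rp pin y by simp
      moreover have "(\<rho>^^i) ((\<pi>^^j) y) = \<alpha> ((\<pi>^^i) y)" using eq ap[OF y] by simp
      ultimately show False using a pin[OF y] by metis
    next
      assume j: "j = 2*i+1"
      have "(\<pi>^^j) y = (\<pi>^^i) ((\<pi>^^(i+1)) y)" unfolding j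
        by (metis add.commute funpow_add mult_2 o_apply add.assoc)
      moreover have "(\<pi>^^(i+1)) y \<in> S" using pin y by blast
      ultimately have "(\<rho>^^i) ((\<pi>^^j) y) = (\<pi>^^(i+1)) y" using rp by metis
      moreover have "(\<rho>^^i) ((\<pi>^^j) y) = \<alpha> ((\<pi>^^i) y)" using eq ap[OF y] by simp
      moreover have "(\<pi>^^(i+1)) y = \<tau> (\<alpha> ((\<pi>^^i) y))" by (simp add: \<pi>_def)
      ultimately have "\<tau> (\<alpha> ((\<pi>^^i) y)) = \<alpha> ((\<pi>^^i) y)" by simp
      moreover have "\<alpha> ((\<pi>^^i) y) \<in> S" using a pin[OF y] by blast
      ultimately show False using t by blast
    qed
  qed
  obtain k where k: "k > 0" "(\<pi>^^k) x0 = x0" using perm_return[OF fin bij x0] by blast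
  define m where "m = (LEAST k. k > 0 \<and> (\<pi>^^k) x0 = x0)"
  have m: "m > 0" "(\<pi>^^m) x0 = x0" using LeastI[of "\<lambda>k. k > 0 \<and> (\<pi>^^k) x0 = x0", OF conjI[OF k]]
    unfolding m_def by auto
  have mmin: "j > 0 \<Longrightarrow> j < m \<Longrightarrow> (\<pi>^^j) x0 \<noteq> x0" for j
    using not_less_Least[of j "\<lambda>k. k > 0 \<and> (\<pi>^^k) x0 = x0"] unfolding m_def by blast
  have path: "j < m \<Longrightarrow> (x0, (\<pi>^^j) x0) \<in> B\<^sup>*" for j
  proof (induction j)
    case 0 then show ?case by simp
  next
    case (Suc j)
    let ?y = "(\<pi>^^j) x0"
    have yS: "?y \<in> S" using pin x0 by blast
    have e1: "(?y, \<alpha> ?y) \<in> B" unfolding B_def using yS by blast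
    have ayS: "\<alpha> ?y \<in> S" using a yS by blast
    have n1: "\<alpha> ?y \<noteq> x0"
    proof
      assume "\<alpha> ?y = x0"
      then have "?y = \<alpha> x0" using a yS by metis
      then show False using noalpha x0 by blast
    qed
    have n2: "\<alpha> ?y \<noteq> \<tau> x0"
    proof
      assume "\<alpha> ?y = \<tau> x0"
      then have "(\<pi>^^Suc j) x0 = x0" using t x0 by (simp add: \<pi>_def)
      then show False using mmin Suc.prems by blast
    qed
    have e2: "(\<alpha> ?y, \<tau> (\<alpha> ?y)) \<in> B" unfolding B_def using ayS n1 n2 by blast
    have "\<tau> (\<alpha> ?y) = (\<pi>^^Suc j) x0" by (simp add: \<pi>_def)
    then show ?case using Suc e1 e2 by (metis Suc_lessD rtrancl.rtrancl_into_rtrancl)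
  qed
  let ?y = "(\<pi>^^(m-1)) x0"
  have p1: "(x0, ?y) \<in> B\<^sup>*" using path m by simp
  have yS: "?y \<in> S" using pin x0 by blast
  have e1: "(?y, \<alpha> ?y) \<in> B" unfolding B_def using yS by blast
  have "\<tau> (\<alpha> ?y) = x0" using m by (metis Suc_diff_1 comp_apply funpow.simps(2) \<pi>_def)
  then have "\<alpha> ?y = \<tau> x0" using t a yS by metis
  then show ?thesis using p1 e1 unfolding B_def[symmetric] by (metis rtrancl.rtrancl_into_rtrancl)
qed

lemma orbit_sub: "c' \<in> orbit f c \<Longrightarrow> orbit f c' \<subseteq> orbit f c"
proof
  fix z assume "c' \<in> orbit f c" "z \<in> orbit f c'"
  then obtain k j where "c' = (f^^k) c" "z = (f^^j) c'" unfolding orbit_def by blast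
  then have "z = (f^^(j+k)) c" by (simp add: funpow_add)
  then show "z \<in> orbit f c" unfolding orbit_def by blast
qed

lemma self_in_orbit: "c \<in> orbit f c"
  unfolding orbit_def by (auto intro: exI[of _ 0])

lemma orbit_count:
  assumes fin: "finite D" and bij: "bij_betw f D D" and CD: "Ci \<subseteq> D"
    and out: "\<forall>x\<in>D - Ci. f x \<in> Ci"
    and psi: "\<forall>c\<in>Ci. \<psi> c = (if f c \<in> Ci then f c else f (f c))"
  shows "card (orbit f ` D) = card (orbit \<psi> ` Ci)"
proof -
  have fD: "f ` D \<subseteq> D" using bij bij_betw_imp_surj_on by blast
  have psiCi: "\<psi> c \<in> Ci" if "c \<in> Ci" for c
  proof (cases "f c \<in> Ci")
    case True then show ?thesis using psi that by simp
  next
    case False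
    have "f c \<in> D" using fD that CD by blast
    then have "f (f c) \<in> Ci" using out False by blast
    then show ?thesis using psi that False by simp
  qed
  have i1: "(\<psi>^^k) c \<in> Ci \<and> (\<exists>m. (\<psi>^^k) c = (f^^m) c)" if c: "c \<in> Ci" for c k
  proof (induction k)
    case 0 then show ?case using c by (auto intro: exI[of _ 0])
  next
    case (Suc k)
    then obtain m where m: "(\<psi>^^k) c = (f^^m) c" and inC: "(\<psi>^^k) c \<in> Ci" by blast
    have "(\<psi>^^Suc k) c = \<psi> ((\<psi>^^k) c)" by simp
    moreover have "\<psi> ((\<psi>^^k) c) = (f^^(Suc m)) c \<or> \<psi> ((\<psi>^^k) c) = (f^^(Suc (Suc m))) c"
      using psi inC m by simp
    ultimately show ?case using psiCi inC by (metis)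
  qed
  have i2: "\<exists>k. (f^^m) c = (\<psi>^^k) c" if c: "c \<in> Ci" and fm: "(f^^m) c \<in> Ci" for c m
    using fm
  proof (induction m rule: less_induct)
    case (less m)
    show ?case
    proof (cases m)
      case 0 then show ?thesis by (auto intro: exI[of _ 0])
    next
      case (Suc m1)
      show ?thesis
      proof (cases "(f^^m1) c \<in> Ci")
        case True
        then obtain k where k: "(f^^m1) c = (\<psi>^^k) c" using less Suc by blast
        have "(f^^m) c = f ((f^^m1) c)" using Suc by simp
        then have "\<psi> ((\<psi>^^k) c) = (f^^m) c" using psi True k less.prems by simp
        then have "(f^^m) c = (\<psi>^^(Suc k)) c" by simp
        then show ?thesis by (rule exI)
      next
        case False
        then obtain m2 where m2: "m1 = Suc m2" using c by (cases m1) auto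
        have inD: "(f^^m2) c \<in> D" using funpow_in[OF fD] c CD by blast
        have C2: "(f^^m2) c \<in> Ci"
        proof (rule ccontr)
          assume "(f^^m2) c \<notin> Ci"
          then have "f ((f^^m2) c) \<in> Ci" using out inD by blast
          then show False using False m2 by simp
        qed
        have "m2 < m" using Suc m2 by simp
        from less.IH[OF this C2] obtain k where k: "(f^^m2) c = (\<psi>^^k) c" by blast
        have "f ((f^^m2) c) \<notin> Ci" using False m2 by simp
        then have "\<psi> ((\<psi>^^k) c) = f (f ((f^^m2) c))" using psi C2 k by simp
        also have "\<dots> = (f^^m) c" using Suc m2 by simp
        finally have "(f^^m) c = (\<psi>^^(Suc k)) c" by simp
        then show ?thesis by (rule exI)
      qed
    qed
  qed
  have inter: "orbit f c \<inter> Ci = orbit \<psi> c" if c: "c \<in> Ci" for c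
  proof
    show "orbit f c \<inter> Ci \<subseteq> orbit \<psi> c" unfolding orbit_def using i2[OF c] by blast
    show "orbit \<psi> c \<subseteq> orbit f c \<inter> Ci" unfolding orbit_def using i1[OF c] by blast
  qed
  have rep: "\<exists>c\<in>Ci. orbit f d = orbit f c" if d: "d \<in> D" for d
  proof (cases "d \<in> Ci")
    case True then show ?thesis by blast
  next
    case False
    then have fdC: "f d \<in> Ci" using out d by blast
    obtain k where k: "k > 0" "(f^^k) d = d" using perm_return[OF fin bij d] by blast
    have "(f^^k) d = (f^^(Suc (k-1))) d" using k by simp
    also have "\<dots> = (f^^(k-1)) (f d)" by (simp only: funpow_Suc_right o_apply)
    finally have "d = (f^^(k-1)) (f d)" using k by simp
    then have "d \<in> orbit f (f d)" unfolding orbit_def by blast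
    moreover have "f d \<in> orbit f d" unfolding orbit_def by (auto intro: exI[of _ 1])
    ultimately have "orbit f d = orbit f (f d)" using orbit_sub[of d f "f d"] orbit_sub[of "f d" f d] by (rule_tac equalityI) simp_all
    then show ?thesis using fdC by blast
  qed
  have e1: "orbit f ` D = orbit f ` Ci"
  proof
    show "orbit f ` D \<subseteq> orbit f ` Ci"
    proof
      fix Ob assume "Ob \<in> orbit f ` D"
      then obtain d where d: "d \<in> D" "Ob = orbit f d" by blast
      from rep[OF d(1)] obtain c where "c \<in> Ci" "orbit f d = orbit f c" by blast
      then show "Ob \<in> orbit f ` Ci" using d by simp
    qed
    show "orbit f ` Ci \<subseteq> orbit f ` D" using CD by (rule image_mono)
  qed
  have injI: "inj_on (\<lambda>Ob. Ob \<inter> Ci) (orbit f ` Ci)"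
  proof (rule inj_onI)
    fix O1 O2 assume "O1 \<in> orbit f ` Ci" "O2 \<in> orbit f ` Ci" "O1 \<inter> Ci = O2 \<inter> Ci"
    then obtain c1 c2 where c: "c1 \<in> Ci" "c2 \<in> Ci" "O1 = orbit f c1" "O2 = orbit f c2"
      "orbit f c1 \<inter> Ci = orbit f c2 \<inter> Ci" by blast
    have "c1 \<in> orbit f c1 \<inter> Ci" "c2 \<in> orbit f c2 \<inter> Ci" using self_in_orbit c(1,2) by auto
    then have "c1 \<in> orbit f c2" "c2 \<in> orbit f c1" using c(5) by auto
    then have "orbit f c1 = orbit f c2" using orbit_sub[of c1 f c2] orbit_sub[of c2 f c1] by (rule_tac equalityI) simp_all
    then show "O1 = O2" using c by simp
  qed
  have "card (orbit f ` D) = card ((\<lambda>Ob. Ob \<inter> Ci) ` (orbit f ` Ci))"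
    using e1 card_image[OF injI] by simp
  also have "(\<lambda>Ob. Ob \<inter> Ci) ` (orbit f ` Ci) = orbit \<psi> ` Ci"
    using inter by (auto simp: image_image)
  finally show ?thesis .
qed

locale cc =
  fixes C :: "'d rconf"
  assumes cc: "conn_config C"
begin

lemma fin: "finite (darts C)" and ne: "darts C \<noteq> {}"
  and alD: "d \<in> darts C \<Longrightarrow> alph C d \<in> darts C"
  and alne: "d \<in> darts C \<Longrightarrow> alph C d \<noteq> d"
  and alal: "d \<in> darts C \<Longrightarrow> alph C (alph C d) = d"
  and sbij: "bij_betw (sig C) (darts C) (darts C)"
  and sne: "d \<in> darts C \<Longrightarrow> sig C d \<noteq> d"
  and s3: "d \<in> darts C \<Longrightarrow> sig C (sig C (sig C d)) = d"
  and arD: "arcs C \<subseteq> darts C"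
  and alar: "d \<in> arcs C \<Longrightarrow> alph C d \<in> arcs C"
  and one: "d \<in> darts C \<Longrightarrow> card ({d, sig C d, sig C (sig C d)} \<inter> arcs C) = 1"
  and conn: "d \<in> darts C \<Longrightarrow> e \<in> darts C \<Longrightarrow>
        (d, e) \<in> ({(x, alph C x) | x. x \<in> darts C} \<union> {(x, sig C x) | x. x \<in> darts C})\<^sup>*"
  and euler: "int (card {orbit (sig C) d | d. d \<in> darts C})
       - int (card {{d, alph C d} | d. d \<in> darts C})
       + int (card {orbit (sig C \<circ> alph C) d | d. d \<in> darts C}) = 2"
  using cc unfolding conn_config_def by blast+

lemma sD: "d \<in> darts C \<Longrightarrow> sig C d \<in> darts C"
  using sbij bij_betw_imp_surj_on by blast

lemma sinj: "d \<in> darts C \<Longrightarrow> e \<in> darts C \<Longrightarrow> sig C d = sig C e \<Longrightarrow> d = e"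
  using sbij unfolding bij_betw_def inj_on_def by blast

lemma s2ne: "d \<in> darts C \<Longrightarrow> sig C (sig C d) \<noteq> d"
  using s3 sne sD by metis

lemma s2ne': "d \<in> darts C \<Longrightarrow> sig C (sig C d) \<noteq> sig C d"
  using sne sD by metis

lemma cases3:
  assumes d: "d \<in> darts C"
  shows "(d \<in> arcs C \<and> sig C d \<notin> arcs C \<and> sig C (sig C d) \<notin> arcs C) \<or>
         (d \<notin> arcs C \<and> sig C d \<in> arcs C \<and> sig C (sig C d) \<notin> arcs C) \<or>
         (d \<notin> arcs C \<and> sig C d \<notin> arcs C \<and> sig C (sig C d) \<in> arcs C)"
proof -
  have n1: "sig C d \<noteq> d" using sne d .
  have n2: "sig C (sig C d) \<noteq> d" using s2ne d .
  have n3: "sig C (sig C d) \<noteq> sig C d" using s2ne' d .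
  have o: "card ({d, sig C d, sig C (sig C d)} \<inter> arcs C) = 1" using one d .
  show ?thesis
    using o n1 n2 n3
    by (cases "d \<in> arcs C"; cases "sig C d \<in> arcs C"; cases "sig C (sig C d) \<in> arcs C")
       (simp_all add: Int_insert_left card_insert_if)
qed

lemma arc_s1: "a \<in> arcs C \<Longrightarrow> sig C a \<notin> arcs C"
  using cases3 arD by blast
lemma arc_s2: "a \<in> arcs C \<Longrightarrow> sig C (sig C a) \<notin> arcs C"
  using cases3 arD by blast

definition circ where "circ = circ_darts C"

lemma circ_eq: "circ = darts C - arcs C" unfolding circ_def circ_darts_def ..

lemma circ_fin: "finite circ" using fin circ_eq by simp

lemma c1_circ: "a \<in> arcs C \<Longrightarrow> sig C a \<in> circ"
  using arc_s1 sD arD circ_eq by blast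
lemma c2_circ: "a \<in> arcs C \<Longrightarrow> sig C (sig C a) \<in> circ"
  using arc_s2 sD arD circ_eq by blast

lemma circ_form: "c \<in> circ \<Longrightarrow> \<exists>a\<in>arcs C. c = sig C a \<or> c = sig C (sig C a)"
proof -
  assume c: "c \<in> circ"
  then have cD: "c \<in> darts C" "c \<notin> arcs C" using circ_eq by auto
  from cases3[OF cD(1)] cD(2) consider "sig C c \<in> arcs C" | "sig C (sig C c) \<in> arcs C" by blast
  then show ?thesis
  proof cases
    case 1 then show ?thesis using s3 cD by (metis)
  next
    case 2 then show ?thesis using s3 cD by (metis)
  qed
qed

lemma al_circ: "c \<in> circ \<Longrightarrow> alph C c \<in> circ"
  using alD alal alar circ_eq by (metis DiffD1 DiffD2 DiffI)

lemma arc_c1_inj: "a \<in> arcs C \<Longrightarrow> b \<in> arcs C \<Longrightarrow> sig C a = sig C b \<Longrightarrow> a = b"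
  using sinj arD by blast
lemma arc_c2_inj:
  assumes "a \<in> arcs C" "b \<in> arcs C" "sig C (sig C a) = sig C (sig C b)" shows "a = b"
proof -
  have "a \<in> darts C" "b \<in> darts C" using assms arD by auto
  then have "sig C a = sig C b" using sinj sD assms(3) by blast
  then show ?thesis using sinj \<open>a \<in> darts C\<close> \<open>b \<in> darts C\<close> by blast
qed
lemma arc_c12:
  assumes "a \<in> arcs C" "b \<in> arcs C" shows "sig C a \<noteq> sig C (sig C b)"
proof
  assume "sig C a = sig C (sig C b)"
  moreover have "a \<in> darts C" "sig C b \<in> darts C" using assms arD sD by auto
  ultimately have "a = sig C b" using sinj by blast
  then show False using arc_s1 assms by blast
qed

lemma other1: "a \<in> arcs C \<Longrightarrow> other C (sig C a) = sig C (sig C a)"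
  unfolding other_def using arc_s2 by simp
lemma other2: "a \<in> arcs C \<Longrightarrow> other C (sig C (sig C a)) = sig C a"
  unfolding other_def using s3 arD by auto
lemma surg1: "a \<in> arcs C \<Longrightarrow> surg C (sig C a) = sig C (sig C (alph C a))"
  unfolding surg_def using s3 arD by auto
lemma surg2: "a \<in> arcs C \<Longrightarrow> surg C (sig C (sig C a)) = sig C (alph C a)"
  unfolding surg_def using s3 arD arc_s1 by auto

definition ar where "ar c = (if sig C c \<in> arcs C then sig C c else sig C (sig C c))"

lemma ar1: "a \<in> arcs C \<Longrightarrow> ar (sig C a) = a"
  unfolding ar_def using arc_s2 s3 arD by auto
lemma ar2: "a \<in> arcs C \<Longrightarrow> ar (sig C (sig C a)) = a"
  unfolding ar_def using s3 arD by auto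

lemma ar_arc: "c \<in> circ \<Longrightarrow> ar c \<in> arcs C"
  using circ_form ar1 ar2 by metis

lemma ar_eq: "c \<in> circ \<Longrightarrow> ar c = a \<Longrightarrow> c = sig C a \<or> c = sig C (sig C a)"
  using circ_form ar1 ar2 by metis

end

context cc begin

definition tau where "tau A c = (if ar c \<in> A then surg C c else other C c)"
definition R where "R A = {(x, alph C x) | x. x \<in> circ} \<union> {(x, tau A x) | x. x \<in> circ}"
definition mc where "mc A = ncomp circ (R A)"
definition K where "K A = R {} \<union> R A"
definition kc where "kc A = ncomp circ (K A)"
definition aclosed where "aclosed A \<longleftrightarrow> A \<subseteq> arcs C \<and> (\<forall>x\<in>A. alph C x \<in> A)"

lemma tau_c1: "a \<in> arcs C \<Longrightarrow> tau A (sig C a) = (if a \<in> A then sig C (sig C (alph C a)) else sig C (sig C a))"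
  by (simp add: tau_def ar1 surg1 other1)
lemma tau_c2: "a \<in> arcs C \<Longrightarrow> tau A (sig C (sig C a)) = (if a \<in> A then sig C (alph C a) else sig C a)"
  by (simp add: tau_def ar2 surg2 other2)

lemma acl_iff: "aclosed A \<Longrightarrow> a \<in> arcs C \<Longrightarrow> alph C a \<in> A \<longleftrightarrow> a \<in> A"
  unfolding aclosed_def using alal arD by (metis subsetD)

lemma alal_arc: "a \<in> arcs C \<Longrightarrow> alph C (alph C a) = a" using alal arD by blast

lemma tau_props:
  assumes A: "aclosed A" and c: "c \<in> circ"
  shows "tau A c \<in> circ \<and> tau A (tau A c) = c \<and> tau A c \<noteq> c"
proof -
  obtain a where a: "a \<in> arcs C" "c = sig C a \<or> c = sig C (sig C a)" using circ_form c by blast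
  have a': "alph C a \<in> arcs C" using alar a by blast
  have ii: "alph C a \<in> A \<longleftrightarrow> a \<in> A" using acl_iff A a by blast
  have aa: "alph C (alph C a) = a" using alal_arc a by blast
  from a(2) show ?thesis
  proof
    assume c1: "c = sig C a"
    show ?thesis
    proof (cases "a \<in> A")
      case True
      then show ?thesis using c1 tau_c1[OF a(1)] tau_c2[OF a'] ii aa c2_circ[OF a'] arc_c12[OF a(1) a'] by auto
    next
      case False
      then show ?thesis using c1 tau_c1[OF a(1)] tau_c2[OF a(1)] c2_circ[OF a(1)] arc_c12[OF a(1) a(1)] by auto
    qed
  next
    assume c2: "c = sig C (sig C a)"
    show ?thesis
    proof (cases "a \<in> A")
      case True
      then show ?thesis using c2 tau_c2[OF a(1)] tau_c1[OF a'] ii aa c1_circ[OF a'] arc_c12[OF a' a(1)] by auto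
    next
      case False
      then show ?thesis using c2 tau_c1[OF a(1)] tau_c2[OF a(1)] c1_circ[OF a(1)] arc_c12[OF a(1) a(1)] by auto
    qed
  qed
qed

lemma al_props: "c \<in> circ \<Longrightarrow> alph C c \<in> circ \<and> alph C (alph C c) = c \<and> alph C c \<noteq> c"
  using al_circ alal alne circ_eq by auto

lemma R_sym: assumes A: "aclosed A" shows "sym (R A)"
proof -
  have "(y, x) \<in> R A" if "(x, y) \<in> R A" for x y
  proof -
    from that consider "x \<in> circ" "y = alph C x" | "x \<in> circ" "y = tau A x" unfolding R_def by blast
    then show ?thesis
    proof cases
      case 1 then have "y \<in> circ" "alph C y = x" using al_props by auto
      then show ?thesis unfolding R_def by blast
    next
      case 2 then have "y \<in> circ" "tau A y = x" using tau_props[OF A] by auto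
      then show ?thesis unfolding R_def by blast
    qed
  qed
  then show ?thesis unfolding sym_def by blast
qed

lemma K_sym: "aclosed A \<Longrightarrow> sym (K A)"
  unfolding K_def using R_sym[of "{}"] R_sym[of A] by (simp add: aclosed_def sym_Un)

end

locale sw = cc +
  fixes A a
  assumes acl: "aclosed A" and aa: "a \<in> arcs C" and anA: "a \<notin> A"
begin

abbreviation "a' \<equiv> alph C a"
abbreviation "c1 \<equiv> sig C a"
abbreviation "c2 \<equiv> sig C (sig C a)"
abbreviation "c1' \<equiv> sig C a'"
abbreviation "c2' \<equiv> sig C (sig C a')"
abbreviation "A' \<equiv> A \<union> {a, a'}"

lemma a'arc: "a' \<in> arcs C" using alar aa by blast
lemma a'nA: "a' \<notin> A" using acl_iff[OF acl aa] anA by blast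
lemma a'a: "alph C a' = a" using alal_arc aa by blast
lemma ane: "a' \<noteq> a" using alne aa arD by blast

lemma acl': "aclosed A'"
  using acl aa a'arc a'a unfolding aclosed_def by auto

lemma dist: "c1 \<noteq> c2" "c1 \<noteq> c1'" "c1 \<noteq> c2'" "c2 \<noteq> c1'" "c2 \<noteq> c2'" "c1' \<noteq> c2'"
proof -
  show "c1 \<noteq> c2" using arc_c12[OF aa aa] .
  show "c1 \<noteq> c1'" using arc_c1_inj[OF aa a'arc] ane by auto
  show "c1 \<noteq> c2'" using arc_c12[OF aa a'arc] .
  show "c2 \<noteq> c1'" using arc_c12[OF a'arc aa] by auto
  show "c2 \<noteq> c2'" using arc_c2_inj[OF aa a'arc] ane by auto
  show "c1' \<noteq> c2'" using arc_c12[OF a'arc a'arc] .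
qed

lemma incirc: "c1 \<in> circ" "c2 \<in> circ" "c1' \<in> circ" "c2' \<in> circ"
  using c1_circ c2_circ aa a'arc by auto

lemma tauA: "tau A c1 = c2" "tau A c2 = c1" "tau A c1' = c2'" "tau A c2' = c1'"
  using tau_c1 tau_c2 aa a'arc anA a'nA by auto

lemma tauA': "tau A' c1 = c2'" "tau A' c2 = c1'" "tau A' c1' = c2" "tau A' c2' = c1"
  using tau_c1[OF aa, of A'] tau_c2[OF aa, of A'] tau_c1[OF a'arc, of A'] tau_c2[OF a'arc, of A'] a'a
  by auto

lemma tau_same: "x \<in> circ \<Longrightarrow> x \<notin> {c1, c2, c1', c2'} \<Longrightarrow> tau A' x = tau A x"
proof -
  assume x: "x \<in> circ" "x \<notin> {c1, c2, c1', c2'}"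
  have "ar x \<noteq> a" using ar_eq x by blast
  moreover have "ar x \<noteq> a'" using ar_eq x by blast
  ultimately show ?thesis unfolding tau_def by auto
qed

definition B where "B = {(x, alph C x) | x. x \<in> circ} \<union> {(x, tau A x) | x. x \<in> circ - {c1, c2, c1', c2'}}"

lemma split_tau: "{(x, tau X x) | x. x \<in> circ} = {(x, tau X x) | x. x \<in> circ - {c1, c2, c1', c2'}}
   \<union> {(c1, tau X c1), (c2, tau X c2), (c1', tau X c1'), (c2', tau X c2')}"
  using incirc by blast

lemma tau_part_same: "{(x, tau A' x) | x. x \<in> circ - {c1, c2, c1', c2'}} = {(x, tau A x) | x. x \<in> circ - {c1, c2, c1', c2'}}"
  unfolding Setcompr_eq_image by (rule image_cong[OF refl]) (use tau_same in blast)

lemma RA_eq: "R A = B \<union> {(c1,c2),(c2,c1),(c1',c2'),(c2',c1')}"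
proof -
  have "R A = {(x, alph C x) | x. x \<in> circ} \<union> ({(x, tau A x) | x. x \<in> circ - {c1, c2, c1', c2'}}
   \<union> {(c1, tau A c1), (c2, tau A c2), (c1', tau A c1'), (c2', tau A c2')})"
    unfolding R_def by (subst split_tau) (rule refl)
  then show ?thesis unfolding B_def tauA by blast
qed

lemma RA'_eq: "R A' = B \<union> {(c1,c2'),(c2',c1),(c2,c1'),(c1',c2)}"
proof -
  have "R A' = {(x, alph C x) | x. x \<in> circ} \<union> ({(x, tau A' x) | x. x \<in> circ - {c1, c2, c1', c2'}}
   \<union> {(c1, tau A' c1), (c2, tau A' c2), (c1', tau A' c1'), (c2', tau A' c2')})"
    unfolding R_def by (subst split_tau) (rule refl)
  then show ?thesis unfolding B_def tauA' tau_part_same by blast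
qed

lemma B_sym: "sym B"
proof -
  have "(y, x) \<in> B" if "(x, y) \<in> B" for x y
  proof -
    from that consider "x \<in> circ" "y = alph C x" | "x \<in> circ" "x \<notin> {c1, c2, c1', c2'}" "y = tau A x"
      unfolding B_def by blast
    then show ?thesis
    proof cases
      case 1 then show ?thesis unfolding B_def using al_props by auto
    next
      case 2
      then have yc: "y \<in> circ" "tau A y = x" using tau_props acl by auto
      have "y \<notin> {c1, c2, c1', c2'}" using 2 tauA yc(2) by auto
      then show ?thesis unfolding B_def using yc by auto
    qed
  qed
  then show ?thesis unfolding sym_def by blast
qed

lemma nb1: "(c1, c2) \<in> (B \<union> {(c1',c2'),(c2',c1')})\<^sup>*"
proof -
  have "(c1, tau A c1) \<in> ({(x, alph C x) | x. x \<in> circ} \<union> {(x, tau A x) | x. x \<in> circ - {c1, tau A c1}})\<^sup>*"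
    by (rule no_bridge) (use circ_fin al_props tau_props[OF acl] incirc in auto)
  moreover have "{(x, alph C x) | x. x \<in> circ} \<union> {(x, tau A x) | x. x \<in> circ - {c1, tau A c1}}
      = B \<union> {(c1',c2'),(c2',c1')}"
    unfolding B_def using tauA incirc dist by auto
  ultimately show ?thesis using tauA by simp
qed

lemma nb2: "(c1', c2') \<in> (B \<union> {(c1,c2),(c2,c1)})\<^sup>*"
proof -
  have "(c1', tau A c1') \<in> ({(x, alph C x) | x. x \<in> circ} \<union> {(x, tau A x) | x. x \<in> circ - {c1', tau A c1'}})\<^sup>*"
    by (rule no_bridge) (use circ_fin al_props tau_props[OF acl] incirc in auto)
  moreover have "{(x, alph C x) | x. x \<in> circ} \<union> {(x, tau A x) | x. x \<in> circ - {c1', tau A c1'}}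
      = B \<union> {(c1,c2),(c2,c1)}"
    unfolding B_def using tauA incirc dist by auto
  ultimately show ?thesis using tauA by simp
qed

end

lemma restrict_path:
  assumes "(u,w) \<in> (B \<union> F)\<^sup>*" and "B \<union> F \<subseteq> R" and "\<forall>(p,q)\<in>F. (u,p) \<notin> R\<^sup>*"
  shows "(u,w) \<in> B\<^sup>*"
  using assms(1)
proof (induction rule: rtrancl_induct)
  case base then show ?case by simp
next
  case (step y z)
  have "(u,y) \<in> R\<^sup>*" using step.IH assms(2) rtrancl_mono by blast
  then have "(y,z) \<notin> F" using assms(3) by blast
  then have "(y,z) \<in> B" using step.hyps(2) by blast
  then show ?case using step.IH by (rule rtrancl_into_rtrancl[rotated])
qed

lemma ncomp_cong: "Q\<^sup>* = Q'\<^sup>* \<Longrightarrow> ncomp S Q = ncomp S Q'"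
  unfolding ncomp_def by simp

lemma sym_pair: "sym {(u,v),(v,u)}" unfolding sym_def by auto

lemma symr: "sym Q \<Longrightarrow> (x,y) \<in> Q\<^sup>* \<Longrightarrow> (y,x) \<in> Q\<^sup>*"
  using sym_rtrancl by (metis symD)

context sw begin

lemma B_sub_circ: "B \<subseteq> circ \<times> circ"
  unfolding B_def using al_props tau_props[OF acl] by auto

lemma S1: "mc A' \<le> mc A + 1"
proof -
  let ?E1 = "{(c1',c2'),(c2',c1')}"
  have symB1: "sym (B \<union> ?E1)" using B_sym sym_pair by (rule sym_Un)
  have h1: "R A = (B \<union> ?E1) \<union> {(c1,c2),(c2,c1)}" using RA_eq by blast
  have n12: "(c2,c1) \<in> (B \<union> ?E1)\<^sup>*" using symr[OF symB1 nb1] .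
  have "mc A = ncomp circ (B \<union> ?E1)"
    unfolding mc_def h1 by (rule ncomp_cong) (rule rtrancl_add_edge_same[OF nb1 n12])
  moreover have "ncomp circ B \<le> ncomp circ (B \<union> ?E1) + 1"
    using ncomp_add[OF circ_fin B_sym incirc(3) incirc(4)] by (simp split: if_splits)
  moreover have "mc A' \<le> ncomp circ B"
  proof -
    have h2: "R A' = (B \<union> {(c1,c2'),(c2',c1)}) \<union> {(c2,c1'),(c1',c2)}" using RA'_eq by blast
    have symB2: "sym (B \<union> {(c1,c2'),(c2',c1)})" using B_sym sym_pair by (rule sym_Un)
    have "ncomp circ (B \<union> {(c1,c2'),(c2',c1)}) \<le> ncomp circ B"
      using ncomp_add[OF circ_fin B_sym incirc(1) incirc(4)] by (simp split: if_splits)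
    moreover have "mc A' \<le> ncomp circ (B \<union> {(c1,c2'),(c2',c1)})"
      using ncomp_add[OF circ_fin symB2 incirc(2) incirc(3)] unfolding mc_def h2 by (simp split: if_splits)
    ultimately show ?thesis by simp
  qed
  ultimately show ?thesis by simp
qed

lemma E_R0: "{(c1,c2),(c2,c1),(c1',c2'),(c2',c1')} \<subseteq> R {}"
proof -
  have t: "tau {} c1 = c2" "tau {} c2 = c1" "tau {} c1' = c2'" "tau {} c2' = c1'"
    using tau_c1[OF aa, of "{}"] tau_c2[OF aa, of "{}"] tau_c1[OF a'arc, of "{}"]
      tau_c2[OF a'arc, of "{}"] by simp_all
  have "(x, tau {} x) \<in> R {}" if "x \<in> circ" for x unfolding R_def using that by blast
  then show ?thesis using t incirc by (metis empty_subsetI insert_subset)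
qed

lemma KA'_eq: "K A' = K A \<union> {(c1,c2'),(c2',c1)} \<union> {(c2,c1'),(c1',c2)}"
proof -
  have "K A' = R {} \<union> (B \<union> {(c1,c2'),(c2',c1),(c2,c1'),(c1',c2)})" unfolding K_def RA'_eq ..
  moreover have "K A = R {} \<union> B" unfolding K_def RA_eq using E_R0 by blast
  ultimately show ?thesis by blast
qed

lemma KA_sym: "sym (K A)" using K_sym[OF acl] .

lemma R0_K: "R {} \<subseteq> K A" unfolding K_def by blast
lemma RA_K: "R A \<subseteq> K A" unfolding K_def by blast

lemma S2:
  assumes con: "(c1, c1') \<in> (R A)\<^sup>*"
  shows "kc A' = kc A"
proof -
  have c11: "(c1, c1') \<in> (K A)\<^sup>*" using con RA_K rtrancl_mono by blast
  have e1: "(c1', c2') \<in> K A" "(c2, c1) \<in> K A" using E_R0 R0_K by auto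
  have p1: "(c1, c2') \<in> (K A)\<^sup>*" using c11 e1 by (meson rtrancl.rtrancl_into_rtrancl)
  have p2: "(c2, c1') \<in> (K A)\<^sup>*" using c11 e1 by (meson converse_rtrancl_into_rtrancl)
  have q1: "(K A \<union> {(c1,c2'),(c2',c1)})\<^sup>* = (K A)\<^sup>*"
    by (rule rtrancl_add_edge_same[OF p1 symr[OF KA_sym p1]])
  have p2': "(c2, c1') \<in> (K A \<union> {(c1,c2'),(c2',c1)})\<^sup>*" using p2 q1 by simp
  have q2: "(K A \<union> {(c1,c2'),(c2',c1)} \<union> {(c2,c1'),(c1',c2)})\<^sup>* = (K A \<union> {(c1,c2'),(c2',c1)})\<^sup>*"
    by (rule rtrancl_add_edge_same[OF p2']) (use symr[OF KA_sym p2] q1 in simp)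
  show ?thesis unfolding kc_def KA'_eq by (rule ncomp_cong) (rule trans[OF q2 q1])
qed

lemma S3a: "kc A \<le> kc A' + 1"
proof -
  let ?K1 = "K A \<union> {(c1,c2'),(c2',c1)}"
  have symK1: "sym ?K1" using KA_sym sym_pair by (rule sym_Un)
  have k1: "kc A \<le> ncomp circ ?K1 + 1"
    using ncomp_add[OF circ_fin KA_sym incirc(1) incirc(4)] unfolding kc_def by (simp split: if_splits)
  have e1: "(c1', c2') \<in> K A" using E_R0 R0_K by blast
  have e2: "(c2, c1) \<in> K A" using E_R0 R0_K by blast
  have sub1: "(K A)\<^sup>* \<subseteq> ?K1\<^sup>*" by (rule rtrancl_mono) (rule Un_upper1)
  have x1: "(c2, c1) \<in> ?K1\<^sup>*" using r_into_rtrancl[OF e2] sub1 by (rule subsetD[rotated])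
  have x2: "(c1, c2') \<in> ?K1\<^sup>*" by (rule r_into_rtrancl) (rule UnI2, simp)
  have x3: "(c2', c1') \<in> ?K1\<^sup>*" using symr[OF KA_sym r_into_rtrancl[OF e1]] sub1 by (rule subsetD[rotated])
  have p: "(c2, c1') \<in> ?K1\<^sup>*" using rtrancl_trans[OF rtrancl_trans[OF x1 x2] x3] .
  have "(?K1 \<union> {(c2,c1'),(c1',c2)})\<^sup>* = ?K1\<^sup>*"
    by (rule rtrancl_add_edge_same[OF p symr[OF symK1 p]])
  then have "kc A' = ncomp circ ?K1" unfolding kc_def KA'_eq by (rule ncomp_cong)
  then show ?thesis using k1 by simp
qed

lemma S3b:
  assumes ncon: "(c1, c1') \<notin> (R A)\<^sup>*"
  shows "mc A' + 1 \<le> mc A"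
proof -
  have symRA: "sym (R A)" using R_sym[OF acl] .
  have t1a: "(c2', c1') \<in> R A" unfolding RA_eq by blast
  have t1b: "(c1, c2) \<in> R A" unfolding RA_eq by blast
  have nc2: "(c1, c2') \<notin> (R A)\<^sup>*"
  proof
    assume "(c1, c2') \<in> (R A)\<^sup>*"
    then have "(c1, c1') \<in> (R A)\<^sup>*" using t1a by (rule rtrancl_into_rtrancl)
    then show False using ncon by (rule notE[rotated])
  qed
  have m1: "ncomp circ (R A \<union> {(c1,c2'),(c2',c1)}) + 1 = mc A"
    using ncomp_add[OF circ_fin symRA incirc(1) incirc(4)] nc2 unfolding mc_def by simp
  let ?R1 = "R A \<union> {(c1,c2'),(c2',c1)}"
  have symR1: "sym ?R1" using symRA sym_pair by (rule sym_Un)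
  have sub1: "(R A)\<^sup>* \<subseteq> ?R1\<^sup>*" by (rule rtrancl_mono) (rule Un_upper1)
  have x1: "(c2, c1) \<in> ?R1\<^sup>*" using symr[OF symRA r_into_rtrancl[OF t1b]] sub1 by (rule subsetD[rotated])
  have x2: "(c1, c2') \<in> ?R1\<^sup>*" by (rule r_into_rtrancl) (rule UnI2, simp)
  have x3: "(c2', c1') \<in> ?R1\<^sup>*" using r_into_rtrancl[OF t1a] sub1 by (rule subsetD[rotated])
  have p: "(c2, c1') \<in> ?R1\<^sup>*" using rtrancl_trans[OF rtrancl_trans[OF x1 x2] x3] .
  have m2: "(?R1 \<union> {(c2,c1'),(c1',c2)})\<^sup>* = ?R1\<^sup>*"
    by (rule rtrancl_add_edge_same[OF p symr[OF symR1 p]])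
  have b1: "(c1, c2) \<in> B\<^sup>*"
  proof (rule restrict_path[OF nb1])
    show "B \<union> {(c1',c2'),(c2',c1')} \<subseteq> R A" unfolding RA_eq by blast
    show "\<forall>(p,q)\<in>{(c1',c2'),(c2',c1')}. (c1,p) \<notin> (R A)\<^sup>*" using ncon nc2 by simp
  qed
  have nc3: "(c1', c1) \<notin> (R A)\<^sup>*"
  proof
    assume "(c1', c1) \<in> (R A)\<^sup>*"
    then have "(c1, c1') \<in> (R A)\<^sup>*" by (rule symr[OF symRA])
    then show False using ncon by (rule notE[rotated])
  qed
  have nc4: "(c1', c2) \<notin> (R A)\<^sup>*"
  proof
    assume "(c1', c2) \<in> (R A)\<^sup>*"
    then have "(c1', c1) \<in> (R A)\<^sup>*" using symr[OF symRA r_into_rtrancl[OF t1b]] by (rule rtrancl_trans)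
    then show False using nc3 by (rule notE[rotated])
  qed
  have b2: "(c1', c2') \<in> B\<^sup>*"
  proof (rule restrict_path[OF nb2])
    show "B \<union> {(c1,c2),(c2,c1)} \<subseteq> R A" unfolding RA_eq by blast
    show "\<forall>(p,q)\<in>{(c1,c2),(c2,c1)}. (c1',p) \<notin> (R A)\<^sup>*" using nc3 nc4 by simp
  qed
  have BR': "B \<subseteq> R A'" unfolding RA'_eq by (rule Un_upper1)
  have symB: "sym B" using B_sym .
  have subB: "B\<^sup>* \<subseteq> (R A')\<^sup>*" using BR' by (rule rtrancl_mono)
  have r1: "(c1, c2) \<in> (R A')\<^sup>*" using b1 subB by (rule subsetD[rotated])
  have r2: "(c2, c1) \<in> (R A')\<^sup>*" using symr[OF symB b1] subB by (rule subsetD[rotated])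
  have r3: "(c1', c2') \<in> (R A')\<^sup>*" using b2 subB by (rule subsetD[rotated])
  have r4: "(c2', c1') \<in> (R A')\<^sup>*" using symr[OF symB b2] subB by (rule subsetD[rotated])
  have q1: "(R A' \<union> {(c1,c2),(c2,c1)})\<^sup>* = (R A')\<^sup>*"
    by (rule rtrancl_add_edge_same[OF r1 r2])
  have r3': "(c1', c2') \<in> (R A' \<union> {(c1,c2),(c2,c1)})\<^sup>*" using r3 q1 by simp
  have r4': "(c2', c1') \<in> (R A' \<union> {(c1,c2),(c2,c1)})\<^sup>*" using r4 q1 by simp
  have q2: "(R A' \<union> {(c1,c2),(c2,c1)} \<union> {(c1',c2'),(c2',c1')})\<^sup>* = (R A')\<^sup>*"
    using rtrancl_add_edge_same[OF r3' r4'] q1 by simp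
  have seteq: "R A' \<union> {(c1,c2),(c2,c1)} \<union> {(c1',c2'),(c2',c1')} = ?R1 \<union> {(c2,c1'),(c1',c2)}"
    unfolding RA_eq RA'_eq by blast
  have "(R A')\<^sup>* = ?R1\<^sup>*"
    using q2 m2 unfolding seteq by simp
  then have "mc A' = ncomp circ ?R1"
    unfolding mc_def by (rule ncomp_cong)
  then show ?thesis using m1 by simp
qed

end

context cc begin

lemma R0_eq: "R {} = {(x, alph C x) | x. x \<in> circ_darts C} \<union> {(x, other C x) | x. x \<in> circ_darts C}"
  unfolding R_def tau_def circ_def by simp

lemma starts_mc: "card (starts C) = mc {}"
  unfolding starts_def start_circ_def mc_def ncomp_def R0_eq circ_def ..

lemma Rarcs_eq: "R (arcs C) = {(x, alph C x) | x. x \<in> circ_darts C} \<union> {(x, surg C x) | x. x \<in> circ_darts C}"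
proof -
  have "{(x, tau (arcs C) x) | x. x \<in> circ} = {(x, surg C x) | x. x \<in> circ}"
    unfolding Setcompr_eq_image by (rule image_cong[OF refl]) (simp add: tau_def ar_arc)
  then show ?thesis unfolding R_def circ_def by simp
qed

lemma ends_mc: "card (ends C) = mc (arcs C)"
  unfolding ends_def end_circ_def mc_def ncomp_def Rarcs_eq circ_def ..

lemma kc0: "kc {} = mc {}" unfolding kc_def mc_def K_def by simp

lemma acl_arcs: "aclosed (arcs C)" unfolding aclosed_def using alar by blast
lemma acl_empty: "aclosed {}" unfolding aclosed_def by blast

lemma K_al: "x \<in> circ \<Longrightarrow> (x, alph C x) \<in> K A" unfolding K_def R_def by blast
lemma K_t0: "x \<in> circ \<Longrightarrow> (x, tau {} x) \<in> K A" unfolding K_def R_def by blast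
lemma K_t: "x \<in> circ \<Longrightarrow> (x, tau A x) \<in> K A" unfolding K_def R_def by blast

definition proj where "proj d = (if d \<in> arcs C then sig C d else d)"

lemma proj_circ: "d \<in> darts C \<Longrightarrow> proj d \<in> circ"
  unfolding proj_def using c1_circ circ_eq by auto

lemma proj_step:
  assumes y: "y \<in> darts C" and z: "z = alph C y \<or> z = sig C y"
  shows "(proj y, proj z) \<in> (K (arcs C))\<^sup>*"
proof -
  let ?K = "K (arcs C)"
  from z show ?thesis
  proof
    assume z1: "z = alph C y"
    show ?thesis
    proof (cases "y \<in> arcs C")
      case True
      have za: "z \<in> arcs C" using alar True z1 by blast
      have p1: "proj y = sig C y" "proj z = sig C z" using True za unfolding proj_def by auto
      have e1: "(sig C y, tau (arcs C) (sig C y)) \<in> ?K" using K_t c1_circ True by blast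
      have t1: "tau (arcs C) (sig C y) = sig C (sig C z)" using tau_c1[OF True] True z1 by simp
      have e2: "(sig C (sig C z), tau {} (sig C (sig C z))) \<in> ?K" using K_t0 c2_circ za by blast
      have t2: "tau {} (sig C (sig C z)) = sig C z" using tau_c2[OF za] by simp
      show ?thesis unfolding p1 using e1 e2 t1 t2
        by (metis converse_rtrancl_into_rtrancl r_into_rtrancl)
    next
      case False
      then have yc: "y \<in> circ" using y circ_eq by blast
      then have zc: "z \<in> circ" using al_circ z1 by blast
      have "proj y = y" "proj z = z" using yc zc circ_eq unfolding proj_def by auto
      then show ?thesis using r_into_rtrancl[OF K_al[OF yc]] z1 by simp
    qed
  next
    assume z2: "z = sig C y"
    show ?thesis
    proof (cases "y \<in> arcs C")
      case True
      then have "proj y = sig C y" "proj z = sig C y" using c1_circ[OF True] circ_eq z2 unfolding proj_def by auto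
      then show ?thesis by simp
    next
      case False
      then have yc: "y \<in> circ" using y circ_eq by blast
      obtain a where a: "a \<in> arcs C" "y = sig C a \<or> y = sig C (sig C a)" using circ_form yc by blast
      from a(2) show ?thesis
      proof
        assume ya: "y = sig C a"
        then have zz: "z = sig C (sig C a)" using z2 by simp
        have "proj y = y" "proj z = z" using yc c2_circ[OF a(1)] zz circ_eq unfolding proj_def by auto
        moreover have "tau {} y = z" using tau_c1[OF a(1)] ya zz by simp
        ultimately show ?thesis using r_into_rtrancl[OF K_t0[OF yc]] by simp
      next
        assume ya: "y = sig C (sig C a)"
        then have zz: "z = a" using z2 s3 a(1) arD by auto
        have "proj y = y" "proj z = sig C a" using yc a(1) zz circ_eq unfolding proj_def by auto
        moreover have "tau {} y = sig C a" using tau_c2[OF a(1)] ya by simp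
        ultimately show ?thesis using r_into_rtrancl[OF K_t0[OF yc]] by simp
      qed
    qed
  qed
qed

lemma proj_path:
  assumes "(d, e) \<in> ({(x, alph C x) | x. x \<in> darts C} \<union> {(x, sig C x) | x. x \<in> darts C})\<^sup>*"
  shows "(proj d, proj e) \<in> (K (arcs C))\<^sup>*"
  using assms
proof (induction rule: rtrancl_induct)
  case base then show ?case by simp
next
  case (step y z)
  then have "y \<in> darts C" "z = alph C y \<or> z = sig C y" by blast+
  then have "(proj y, proj z) \<in> (K (arcs C))\<^sup>*" by (rule proj_step)
  then show ?case using step.IH by (rule rtrancl_trans[rotated])
qed

lemma circ_ne: "circ \<noteq> {}"
proof -
  obtain d where d: "d \<in> darts C" using ne by blast
  then show ?thesis using proj_circ by blast
qed

lemma kc_arcs: "kc (arcs C) = 1"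
proof -
  obtain x0 where x0: "x0 \<in> circ" using circ_ne by blast
  have all: "(x, y) \<in> (K (arcs C))\<^sup>*" if "x \<in> circ" "y \<in> circ" for x y
  proof -
    have "x \<in> darts C" "y \<in> darts C" using that circ_eq by auto
    then have "(proj x, proj y) \<in> (K (arcs C))\<^sup>*" using conn proj_path by blast
    moreover have "proj x = x" "proj y = y" using that circ_eq unfolding proj_def by auto
    ultimately show ?thesis by simp
  qed
  have "(\<lambda>x. {y. (x, y) \<in> (K (arcs C))\<^sup>*}) ` circ = {{y. (x0, y) \<in> (K (arcs C))\<^sup>*}}"
  proof -
    have "{y. (x, y) \<in> (K (arcs C))\<^sup>*} = {y. (x0, y) \<in> (K (arcs C))\<^sup>*}" if "x \<in> circ" for x
    proof -
      have "(x, x0) \<in> (K (arcs C))\<^sup>*" "(x0, x) \<in> (K (arcs C))\<^sup>*" using all that x0 by auto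
      then show ?thesis by (blast intro: rtrancl_trans)
    qed
    then show ?thesis using x0 by blast
  qed
  then show ?thesis unfolding kc_def ncomp_def by simp
qed

lemma card_arcs: "card (arcs C) = 2 * dim C"
proof -
  let ?P = "{{d, alph C d} | d. d \<in> arcs C}"
  have U: "\<Union>?P = arcs C"
  proof
    show "\<Union>?P \<subseteq> arcs C"
    proof
      fix x assume "x \<in> \<Union>?P"
      then obtain d where d: "d \<in> arcs C" "x \<in> {d, alph C d}" by blast
      then show "x \<in> arcs C" using alar[OF d(1)] by blast
    qed
    show "arcs C \<subseteq> \<Union>?P"
    proof
      fix x assume x: "x \<in> arcs C"
      then have "{x, alph C x} \<in> ?P" by blast
      then show "x \<in> \<Union>?P" by blast
    qed
  qed
  have pw: "pairwise disjnt ?P"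
  proof (rule pairwiseI)
    fix p q assume pq: "p \<in> ?P" "q \<in> ?P" "p \<noteq> q"
    then obtain d e where de: "d \<in> arcs C" "e \<in> arcs C" "p = {d, alph C d}" "q = {e, alph C e}" by blast
    have dd: "alph C (alph C d) = d" "alph C (alph C e) = e" using alal_arc de(1,2) by auto
    show "disjnt p q"
    proof (rule ccontr)
      assume "\<not> disjnt p q"
      then obtain x where x: "x \<in> {d, alph C d}" "x \<in> {e, alph C e}" unfolding disjnt_def de(3,4) by blast
      have "{d, alph C d} = {e, alph C e}"
      proof -
        from x(1) have "{d, alph C d} = {x, alph C x}"
        proof
          assume "x = d" then show ?thesis by simp
        next
          assume "x \<in> {alph C d}" then have "x = alph C d" by simp
          then show ?thesis using dd(1) by auto
        qed
        moreover from x(2) have "{e, alph C e} = {x, alph C x}"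
        proof
          assume "x = e" then show ?thesis by simp
        next
          assume "x \<in> {alph C e}" then have "x = alph C e" by simp
          then show ?thesis using dd(2) by auto
        qed
        ultimately show ?thesis by simp
      qed
      then show False using pq(3) de(3,4) by simp
    qed
  qed
  have c2: "card p = 2" if "p \<in> ?P" for p
  proof -
    obtain d where d: "d \<in> arcs C" "p = {d, alph C d}" using \<open>p \<in> ?P\<close> by blast
    have "alph C d \<noteq> d" using alne arD d(1) by blast
    then show ?thesis using d(2) by simp
  qed
  have finP: "\<And>p. p \<in> ?P \<Longrightarrow> finite p" by blast
  have "card (arcs C) = sum card ?P"
    using card_Union_disjoint[OF pw finP] U by simp
  also have "\<dots> = sum (\<lambda>_. 2) ?P" using c2 by (rule sum.cong[OF refl])
  also have "\<dots> = 2 * card ?P" by simp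
  finally show ?thesis unfolding dim_def by simp
qed

lemma fin_arcs: "finite (arcs C)" using fin arD finite_subset by blast

lemma bound:
  assumes "aclosed A"
  shows "2 * int (mc A) \<le> int (card A) + 4 * int (kc A) - 2 * int (mc {})"
  using assms
proof (induction "card A" arbitrary: A rule: less_induct)
  case less
  show ?case
  proof (cases "A = {}")
    case True then show ?thesis using kc0 by simp
  next
    case False
    then obtain a where aA: "a \<in> A" by blast
    have Aarc: "A \<subseteq> arcs C" using less.prems unfolding aclosed_def by blast
    have finA: "finite A" using Aarc fin_arcs finite_subset by blast
    have a: "a \<in> arcs C" using aA Aarc by blast
    have a'A: "alph C a \<in> A" using less.prems aA unfolding aclosed_def by blast
    have ane: "alph C a \<noteq> a" using alne a arD by blast
    define A0 where "A0 = A - {a, alph C a}"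
    have acl0: "aclosed A0"
    proof -
      have "alph C x \<in> A0" if "x \<in> A0" for x
      proof -
        have x: "x \<in> A" "x \<noteq> a" "x \<noteq> alph C a" using that unfolding A0_def by auto
        have xa: "x \<in> arcs C" using x Aarc by blast
        have "alph C x \<in> A" using less.prems x unfolding aclosed_def by blast
        moreover have "alph C x \<noteq> a" using x alal_arc xa by metis
        moreover have "alph C x \<noteq> alph C a" using x alal_arc xa a by metis
        ultimately show ?thesis unfolding A0_def by blast
      qed
      then show ?thesis using Aarc unfolding aclosed_def A0_def by blast
    qed
    have anA0: "a \<notin> A0" unfolding A0_def by blast
    have Aeq: "A = A0 \<union> {a, alph C a}" unfolding A0_def using aA a'A by blast
    have cardA: "card A = card A0 + 2"
    proof -
      have "card A = card A0 + card {a, alph C a}"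
        unfolding Aeq by (rule card_Un_disjoint) (use finA A0_def in auto)
      then show ?thesis using ane by simp
    qed
    have IH: "2 * int (mc A0) \<le> int (card A0) + 4 * int (kc A0) - 2 * int (mc {})"
      using less.hyps[of A0] cardA acl0 by simp
    interpret s: sw C A0 a using acl0 a anA0 by unfold_locales
    show ?thesis
    proof (cases "(sig C a, sig C (alph C a)) \<in> (R A0)\<^sup>*")
      case True
      have "mc A \<le> mc A0 + 1" using s.S1 Aeq by simp
      moreover have "kc A = kc A0" using s.S2[OF True] Aeq by simp
      ultimately show ?thesis using IH cardA by linarith
    next
      case False
      have "mc A + 1 \<le> mc A0" using s.S3b[OF False] Aeq by simp
      moreover have "kc A0 \<le> kc A + 1" using s.S3a Aeq by simp
      ultimately show ?thesis using IH cardA by linarith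
    qed
  qed
qed

lemma euler_bound: "card (starts C) + card (ends C) \<le> dim C + 2"
  using bound[OF acl_arcs] kc_arcs card_arcs starts_mc ends_mc by simp

lemma starts_ne: "card (starts C) \<ge> 1"
proof -
  have "finite (starts C)" unfolding starts_def using circ_fin circ_def by simp
  moreover have "starts C \<noteq> {}" unfolding starts_def using circ_ne circ_def by simp
  ultimately show ?thesis by (simp add: Suc_le_eq card_gt_0_iff)
qed

end

lemma dual_darts[simp]: "darts (dual C) = darts C" by (simp add: dual_def)
lemma dual_alph[simp]: "alph (dual C) = alph C" by (simp add: dual_def)
lemma dual_arcs[simp]: "arcs (dual C) = arcs C" by (simp add: dual_def)
lemma dual_sig: "sig (dual C) d = (if d \<in> arcs C then sig C (sig C (alph C d))
                          else if sig C (sig C d) \<in> arcs C then sig C (sig C d)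
                          else sig C (alph C (sig C d)))" by (simp add: dual_def)
lemma dual_circ[simp]: "circ_darts (dual C) = circ_darts C" by (simp add: circ_darts_def)
lemma dual_dim[simp]: "dim (dual C) = dim C" by (simp add: dim_def)

lemma orbit3:
  assumes "f (f (f d)) = d"
  shows "orbit f d = {d, f d, f (f d)}"
proof -
  have k: "(f^^k) d = (f^^(k mod 3)) d" for k
  proof (induction k rule: less_induct)
    case (less k)
    show ?case
    proof (cases "k < 3")
      case True then show ?thesis by simp
    next
      case False
      then have "k = (k - 3) + 3" by simp
      then have "(f^^k) d = (f^^(k-3)) ((f^^3) d)" by (metis funpow_add o_apply)
      also have "(f^^3) d = d" using assms by (simp add: numeral_3_eq_3)
      finally have "(f^^k) d = (f^^(k-3)) d" .
      moreover have "(k - 3) mod 3 = k mod 3" using False by (simp add: mod_if)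
      moreover have "k - 3 < k" using False by simp
      ultimately show ?thesis using less.IH by metis
    qed
  qed
  have "(f^^(k mod 3)) d \<in> {d, f d, f (f d)}" for k
  proof -
    have "k mod 3 = 0 \<or> k mod 3 = 1 \<or> k mod 3 = 2" by arith
    then show ?thesis by (auto simp: numeral_2_eq_2)
  qed
  then have "orbit f d \<subseteq> {d, f d, f (f d)}" unfolding orbit_def using k by auto
  moreover have "{d, f d, f (f d)} \<subseteq> orbit f d" unfolding orbit_def
  proof -
    have "d = (f^^0) d" "f d = (f^^1) d" "f (f d) = (f^^2) d" by (simp_all add: numeral_2_eq_2)
    then show "{d, f d, f (f d)} \<subseteq> {(f^^k) d | k. True}" by blast
  qed
  ultimately show ?thesis by blast
qed

context cc begin

definition sd where "sd = sig (dual C)"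

lemma sd_a: "a \<in> arcs C \<Longrightarrow> sd a = sig C (sig C (alph C a))"
  unfolding sd_def dual_sig by simp
lemma sd_c1: "a \<in> arcs C \<Longrightarrow> sd (sig C a) = a"
  unfolding sd_def dual_sig using arc_s1 s3 arD by auto
lemma sd_c2: "a \<in> arcs C \<Longrightarrow> sd (sig C (sig C a)) = sig C (alph C a)"
  unfolding sd_def dual_sig using arc_s2 s3 arD arc_s1 by auto

lemma dart_form: "d \<in> darts C \<Longrightarrow> \<exists>a\<in>arcs C. d = a \<or> d = sig C a \<or> d = sig C (sig C a)"
  using circ_form circ_eq by blast

lemma sdD: "d \<in> darts C \<Longrightarrow> sd d \<in> darts C"
proof -
  assume d: "d \<in> darts C"
  then obtain a where a: "a \<in> arcs C" "d = a \<or> d = sig C a \<or> d = sig C (sig C a)" using dart_form by blast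
  have a': "alph C a \<in> arcs C" using alar a by blast
  show ?thesis using a sd_a sd_c1 sd_c2 c1_circ c2_circ a' circ_eq arD by auto
qed

lemma sd3: "d \<in> darts C \<Longrightarrow> sd (sd (sd d)) = d \<and> sd d \<noteq> d"
proof -
  assume d: "d \<in> darts C"
  then obtain a where a: "a \<in> arcs C" "d = a \<or> d = sig C a \<or> d = sig C (sig C a)" using dart_form by blast
  have a': "alph C a \<in> arcs C" using alar a by blast
  have aa: "alph C (alph C a) = a" using alal_arc a by blast
  have nc: "sig C a \<notin> arcs C" "sig C (sig C a) \<notin> arcs C" "sig C (alph C a) \<notin> arcs C"
     "sig C (sig C (alph C a)) \<notin> arcs C" using arc_s1 arc_s2 a a' by auto
  from a(2) show ?thesis
  proof (elim disjE)
    assume "d = a" then show ?thesis using sd_a[OF a(1)] sd_c2[OF a'] sd_c1[OF a(1)] aa nc a by auto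
  next
    assume "d = sig C a" then show ?thesis using sd_a[OF a(1)] sd_c2[OF a'] sd_c1[OF a(1)] aa nc a by auto
  next
    assume "d = sig C (sig C a)" then show ?thesis
      using sd_c2[OF a(1)] sd_c1[OF a'] sd_a[OF a'] aa nc a' arc_c12[OF a' a(1)] by auto
  qed
qed

lemma sd_bij: "bij_betw sd (darts C) (darts C)"
proof -
  have inj: "inj_on sd (darts C)"
  proof (rule inj_onI)
    fix x y assume "x \<in> darts C" "y \<in> darts C" "sd x = sd y"
    then show "x = y" using sd3 by metis
  qed
  have "darts C \<subseteq> sd ` darts C"
  proof
    fix x assume x: "x \<in> darts C"
    then have "sd (sd (sd x)) = x" using sd3 by blast
    moreover have "sd (sd x) \<in> darts C" using sdD x by blast
    ultimately show "x \<in> sd ` darts C" by (metis image_eqI)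
  qed
  then show ?thesis using inj sdD unfolding bij_betw_def by blast
qed

lemma sd_one: "d \<in> darts C \<Longrightarrow> card ({d, sd d, sd (sd d)} \<inter> arcs C) = 1"
proof -
  assume d: "d \<in> darts C"
  then obtain a where a: "a \<in> arcs C" "d = a \<or> d = sig C a \<or> d = sig C (sig C a)" using dart_form by blast
  have a': "alph C a \<in> arcs C" using alar a by blast
  have aa: "alph C (alph C a) = a" using alal_arc a by blast
  have nc: "sig C a \<notin> arcs C" "sig C (sig C a) \<notin> arcs C" "sig C (alph C a) \<notin> arcs C"
     "sig C (sig C (alph C a)) \<notin> arcs C" using arc_s1 arc_s2 a a' by auto
  from a(2) have "{d, sd d, sd (sd d)} \<inter> arcs C = {a} \<or> {d, sd d, sd (sd d)} \<inter> arcs C = {alph C a}"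
  proof (elim disjE)
    assume "d = a" then show ?thesis using sd_a[OF a(1)] sd_c2[OF a'] aa nc a by auto
  next
    assume "d = sig C a" then show ?thesis using sd_a[OF a(1)] sd_c1[OF a(1)] nc a by auto
  next
    assume "d = sig C (sig C a)" then show ?thesis
      using sd_c2[OF a(1)] sd_c1[OF a'] nc a' by auto
  qed
  then show ?thesis by auto
qed

lemma sd_conn:
  assumes d: "d \<in> darts C" and e: "e \<in> darts C"
  shows "(d, e) \<in> ({(x, alph C x) | x. x \<in> darts C} \<union> {(x, sd x) | x. x \<in> darts C})\<^sup>*"
proof -
  let ?G = "{(x, alph C x) | x. x \<in> darts C} \<union> {(x, sig C x) | x. x \<in> darts C}"
  let ?G' = "{(x, alph C x) | x. x \<in> darts C} \<union> {(x, sd x) | x. x \<in> darts C}"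
  have ge: "(x, sd x) \<in> ?G'" if "x \<in> darts C" for x using that by blast
  have ga: "(x, alph C x) \<in> ?G'" if "x \<in> darts C" for x using that by blast
  have stp: "(y, z) \<in> ?G'\<^sup>*" if "(y, z) \<in> ?G" for y z
  proof -
    from that consider "y \<in> darts C" "z = alph C y" | "y \<in> darts C" "z = sig C y" by blast
    then show ?thesis
    proof cases
      case 1 then show ?thesis using ga by blast
    next
      case 2
      then obtain a where a: "a \<in> arcs C" "y = a \<or> y = sig C a \<or> y = sig C (sig C a)" using dart_form by blast
      have a': "alph C a \<in> arcs C" using alar a by blast
      have aa: "alph C (alph C a) = a" using alal_arc a by blast
      have aD: "a \<in> darts C" "alph C a \<in> darts C" using a a' arD by auto
      from a(2) show ?thesis
      proof (elim disjE)
        assume ya: "y = a"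
        have e1: "(a, sig C (sig C (alph C a))) \<in> ?G'" using ge[OF aD(1)] sd_a[OF a(1)] by simp
        have e2: "(sig C (sig C (alph C a)), sig C a) \<in> ?G'"
          using ge[OF c2_circ[OF a', unfolded circ_eq, THEN DiffD1]] sd_c2[OF a'] aa by simp
        show ?thesis using e1 e2 ya 2 by (meson r_into_rtrancl rtrancl_into_rtrancl)
      next
        assume ya: "y = sig C a"
        have e1: "(sig C a, a) \<in> ?G'" using ge[OF c1_circ[OF a(1), unfolded circ_eq, THEN DiffD1]] sd_c1[OF a(1)] by simp
        have e2: "(a, alph C a) \<in> ?G'" using ga[OF aD(1)] by simp
        have e3: "(alph C a, sig C (sig C a)) \<in> ?G'" using ge[OF aD(2)] sd_a[OF a'] aa by simp
        show ?thesis using e1 e2 e3 ya 2 by (meson r_into_rtrancl rtrancl_into_rtrancl)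
      next
        assume ya: "y = sig C (sig C a)"
        have zz: "z = a" using ya 2 s3 aD by simp
        have e1: "(sig C (sig C a), sig C (alph C a)) \<in> ?G'" using ge[OF c2_circ[OF a(1), unfolded circ_eq, THEN DiffD1]] sd_c2[OF a(1)] by simp
        have e2: "(sig C (alph C a), alph C a) \<in> ?G'" using ge[OF c1_circ[OF a', unfolded circ_eq, THEN DiffD1]] sd_c1[OF a'] by simp
        have e3: "(alph C a, a) \<in> ?G'" using ga[OF aD(2)] aa by simp
        show ?thesis using e1 e2 e3 ya zz by (meson r_into_rtrancl rtrancl_into_rtrancl)
      qed
    qed
  qed
  have "(d, e) \<in> ?G\<^sup>*" using conn d e by blast
  then show ?thesis
  proof (induction rule: rtrancl_induct)
    case base then show ?case by simp
  next
    case (step y z)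
    show ?case using step.IH stp[OF step.hyps(2)] by (rule rtrancl_trans)
  qed
qed

end

context cc begin

lemma vcount:
  assumes f3: "\<forall>d\<in>darts C. f (f (f d)) = d"
    and na: "\<forall>a\<in>arcs C. f a \<notin> arcs C \<and> f (f a) \<notin> arcs C"
    and cov: "\<forall>d\<in>darts C. \<exists>a\<in>arcs C. d = a \<or> d = f a \<or> d = f (f a)"
  shows "card {orbit f d | d. d \<in> darts C} = card (arcs C)"
proof -
  have o: "orbit f d = {d, f d, f (f d)}" if "d \<in> darts C" for d
  proof -
    have "f (f (f d)) = d" using f3 that by blast
    then show ?thesis by (rule orbit3)
  qed
  have oa: "orbit f d = orbit f a" if "d \<in> darts C" "a \<in> arcs C" "d = a \<or> d = f a \<or> d = f (f a)" for d a
  proof -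
    have aD: "a \<in> darts C" using that arD by blast
    have f3a: "f (f (f a)) = a" using f3 aD by blast
    have oa: "orbit f a = {a, f a, f (f a)}" using o[OF aD] .
    from that(3) show ?thesis
    proof (elim disjE)
      assume "d = a" then show ?thesis by simp
    next
      assume da: "d = f a"
      have "orbit f d = {f a, f (f a), f (f (f a))}" using o[OF that(1)] da by simp
      then show ?thesis using oa f3a by auto
    next
      assume da: "d = f (f a)"
      have "f (f (f (f a))) = f a" using f3a by simp
      then have "orbit f d = {f (f a), a, f a}" using o[OF that(1)] da f3a by simp
      then show ?thesis using oa by auto
    qed
  qed
  have eq: "{orbit f d | d. d \<in> darts C} = orbit f ` arcs C"
  proof
    show "{orbit f d | d. d \<in> darts C} \<subseteq> orbit f ` arcs C"
    proof
      fix Ob assume "Ob \<in> {orbit f d | d. d \<in> darts C}"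
      then obtain d where d: "d \<in> darts C" "Ob = orbit f d" by blast
      then obtain a where a: "a \<in> arcs C" "d = a \<or> d = f a \<or> d = f (f a)" using cov by blast
      have "orbit f d = orbit f a" using oa[OF d(1) a(1) a(2)] .
      then show "Ob \<in> orbit f ` arcs C" using d(2) a(1) by simp
    qed
    show "orbit f ` arcs C \<subseteq> {orbit f d | d. d \<in> darts C}"
    proof
      fix Ob assume "Ob \<in> orbit f ` arcs C"
      then obtain a where "a \<in> arcs C" "Ob = orbit f a" by blast
      then show "Ob \<in> {orbit f d | d. d \<in> darts C}" using arD by blast
    qed
  qed
  have inj: "inj_on (orbit f) (arcs C)"
  proof (rule inj_onI)
    fix a b assume ab: "a \<in> arcs C" "b \<in> arcs C" "orbit f a = orbit f b"
    have "b \<in> orbit f a" using self_in_orbit[of b f] ab(3) by simp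
    moreover have "a \<in> darts C" using ab(1) arD by blast
    ultimately have "b \<in> {a, f a, f (f a)}" using o by simp
    then show "a = b" using na ab by auto
  qed
  show ?thesis unfolding eq using card_image[OF inj] .
qed

lemma vsig: "card {orbit (sig C) d | d. d \<in> darts C} = card (arcs C)"
proof (rule vcount)
  show "\<forall>d\<in>darts C. sig C (sig C (sig C d)) = d" using s3 by blast
  show "\<forall>a\<in>arcs C. sig C a \<notin> arcs C \<and> sig C (sig C a) \<notin> arcs C" using arc_s1 arc_s2 by blast
  show "\<forall>d\<in>darts C. \<exists>a\<in>arcs C. d = a \<or> d = sig C a \<or> d = sig C (sig C a)" using dart_form by blast
qed

lemma vsd: "card {orbit sd d | d. d \<in> darts C} = card (arcs C)"
proof (rule vcount)
  show "\<forall>d\<in>darts C. sd (sd (sd d)) = d" using sd3 by blast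
  show "\<forall>a\<in>arcs C. sd a \<notin> arcs C \<and> sd (sd a) \<notin> arcs C"
  proof
    fix a assume a: "a \<in> arcs C"
    have a': "alph C a \<in> arcs C" using alar a by blast
    have "sd a = sig C (sig C (alph C a))" using sd_a a by blast
    moreover have "sd (sd a) = sig C a" using sd_a[OF a] sd_c2[OF a'] alal_arc[OF a] by simp
    ultimately show "sd a \<notin> arcs C \<and> sd (sd a) \<notin> arcs C" using arc_s1 arc_s2 a a' by simp
  qed
  show "\<forall>d\<in>darts C. \<exists>a\<in>arcs C. d = a \<or> d = sd a \<or> d = sd (sd a)"
  proof
    fix d assume "d \<in> darts C"
    then obtain a where a: "a \<in> arcs C" "d = a \<or> d = sig C a \<or> d = sig C (sig C a)" using dart_form by blast
    have a': "alph C a \<in> arcs C" using alar a by blast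
    have aa: "alph C (alph C a) = a" using alal_arc a by blast
    have e1: "sd (sd a) = sig C a" using sd_a[OF a(1)] sd_c2[OF a'] aa by simp
    have e2: "sd (alph C a) = sig C (sig C a)" using sd_a[OF a'] aa by simp
    from a(2) show "\<exists>a\<in>arcs C. d = a \<or> d = sd a \<or> d = sd (sd a)"
    proof (elim disjE)
      assume "d = a" then show ?thesis using a by blast
    next
      assume "d = sig C a" then show ?thesis using a e1 by metis
    next
      assume "d = sig C (sig C a)" then show ?thesis using a' e2 by metis
    qed
  qed
qed

lemma al_bij: "bij_betw (alph C) (darts C) (darts C)"
proof -
  have inj: "inj_on (alph C) (darts C)"
  proof (rule inj_onI)
    fix x y assume "x \<in> darts C" "y \<in> darts C" "alph C x = alph C y"
    then show "x = y" using alal by metis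
  qed
  have "darts C \<subseteq> alph C ` darts C"
  proof
    fix x assume x: "x \<in> darts C"
    then have "x = alph C (alph C x)" using alal by simp
    then show "x \<in> alph C ` darts C" using alD[OF x] by blast
  qed
  then show ?thesis using inj alD unfolding bij_betw_def by blast
qed

definition psi where "psi c = (if sig C (alph C c) \<in> circ then sig C (alph C c) else sig C (alph C (sig C (alph C c))))"

lemma faces_sig: "card {orbit (sig C \<circ> alph C) d | d. d \<in> darts C} = card (orbit psi ` circ)"
proof -
  have "card (orbit (sig C \<circ> alph C) ` darts C) = card (orbit psi ` circ)"
  proof (rule orbit_count)
    show "finite (darts C)" using fin .
    show "bij_betw (sig C \<circ> alph C) (darts C) (darts C)" using bij_betw_trans[OF al_bij sbij] .
    show "circ \<subseteq> darts C" using circ_eq by blast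
    show "\<forall>x\<in>darts C - circ. (sig C \<circ> alph C) x \<in> circ"
      using c1_circ alar circ_eq by auto
    show "\<forall>c\<in>circ. psi c = (if (sig C \<circ> alph C) c \<in> circ then (sig C \<circ> alph C) c
          else (sig C \<circ> alph C) ((sig C \<circ> alph C) c))" unfolding psi_def by simp
  qed
  then show ?thesis by (simp add: Setcompr_eq_image)
qed

lemma faces_sd: "card {orbit (sd \<circ> alph C) d | d. d \<in> darts C} = card (orbit psi ` circ)"
proof -
  have "card (orbit (sd \<circ> alph C) ` darts C) = card (orbit psi ` circ)"
  proof (rule orbit_count)
    show "finite (darts C)" using fin .
    show "bij_betw (sd \<circ> alph C) (darts C) (darts C)" using bij_betw_trans[OF al_bij sd_bij] .
    show "circ \<subseteq> darts C" using circ_eq by blast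
    show "\<forall>x\<in>darts C - circ. (sd \<circ> alph C) x \<in> circ"
    proof
      fix x assume "x \<in> darts C - circ"
      then have x: "x \<in> arcs C" using circ_eq by blast
      have "sd (alph C x) = sig C (sig C x)" using sd_a[OF alar[OF x]] alal_arc[OF x] by simp
      then show "(sd \<circ> alph C) x \<in> circ" using c2_circ[OF x] by simp
    qed
    show "\<forall>c\<in>circ. psi c = (if (sd \<circ> alph C) c \<in> circ then (sd \<circ> alph C) c
          else (sd \<circ> alph C) ((sd \<circ> alph C) c))"
    proof
      fix c assume c: "c \<in> circ"
      then have x: "alph C c \<in> circ" using al_circ by blast
      then obtain b where b: "b \<in> arcs C" "alph C c = sig C b \<or> alph C c = sig C (sig C b)" using circ_form by blast
      have b': "alph C b \<in> arcs C" using alar b by blast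
      have bb: "alph C (alph C b) = b" using alal_arc b by blast
      have bnc: "b \<notin> circ" using b circ_eq by blast
      from b(2) show "psi c = (if (sd \<circ> alph C) c \<in> circ then (sd \<circ> alph C) c
          else (sd \<circ> alph C) ((sd \<circ> alph C) c))"
      proof
        assume e: "alph C c = sig C b"
        have p: "psi c = sig C (sig C b)" unfolding psi_def using e c2_circ[OF b(1)] by simp
        have "sd (alph C c) = b" using e sd_c1[OF b(1)] by simp
        moreover have "sd (alph C b) = sig C (sig C b)" using sd_a[OF b'] bb by simp
        ultimately show ?thesis using p bnc by simp
      next
        assume e: "alph C c = sig C (sig C b)"
        have "sig C (alph C c) = b" using e s3 b(1) arD by auto
        then have p: "psi c = sig C (alph C b)" unfolding psi_def using bnc by simp
        have "sd (alph C c) = sig C (alph C b)" using e sd_c2[OF b(1)] by simp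
        then show ?thesis using p c1_circ[OF b'] by simp
      qed
    qed
  qed
  then show ?thesis by (simp add: Setcompr_eq_image)
qed

lemma conn_dual: "conn_config (dual C)"
proof -
  have eul: "int (card {orbit sd d | d. d \<in> darts C})
       - int (card {{d, alph C d} | d. d \<in> darts C})
       + int (card {orbit (sd \<circ> alph C) d | d. d \<in> darts C}) = 2"
    using euler vsig vsd faces_sig faces_sd by simp
  have one': "\<forall>d\<in>darts C. card ({d, sd d, sd (sd d)} \<inter> arcs C) = 1" using sd_one by blast
  have con': "\<forall>d\<in>darts C. \<forall>e\<in>darts C.
        (d, e) \<in> ({(x, alph C x) | x. x \<in> darts C} \<union> {(x, sd x) | x. x \<in> darts C})\<^sup>*"
    using sd_conn by blast
  show ?thesis
    unfolding conn_config_def dual_darts dual_alph dual_arcs sd_def[symmetric]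
    using fin ne alD alne alal sd_bij sd3 arD alar one' con' eul by blast
qed

lemma other_dual: "x \<in> circ \<Longrightarrow> other (dual C) x = surg C x"
proof -
  assume x: "x \<in> circ"
  then obtain a where a: "a \<in> arcs C" "x = sig C a \<or> x = sig C (sig C a)" using circ_form by blast
  have a': "alph C a \<in> arcs C" using alar a by blast
  have od: "other (dual C) x = (if sd x \<in> arcs C then sd (sd x) else sd x)"
    unfolding other_def sd_def by simp
  from a(2) show ?thesis
  proof
    assume "x = sig C a" then show ?thesis using od sd_c1[OF a(1)] sd_a[OF a(1)] surg1[OF a(1)] a by simp
  next
    assume "x = sig C (sig C a)" then show ?thesis
      using od sd_c2[OF a(1)] surg2[OF a(1)] arc_s1[OF a'] by simp
  qed
qed

lemma surg_dual: "x \<in> circ \<Longrightarrow> surg (dual C) x = other C x"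
proof -
  assume x: "x \<in> circ"
  then obtain a where a: "a \<in> arcs C" "x = sig C a \<or> x = sig C (sig C a)" using circ_form by blast
  have a': "alph C a \<in> arcs C" using alar a by blast
  have aa: "alph C (alph C a) = a" using alal_arc a by blast
  have sd_d: "surg (dual C) x = (if sd (sd x) \<in> arcs C then sd (sd (alph C (sd (sd x)))) else sd (alph C (sd x)))"
    unfolding surg_def sd_def by simp
  from a(2) show ?thesis
  proof
    assume xa: "x = sig C a"
    have "sd (sd x) = sig C (sig C (alph C a))" using xa sd_c1[OF a(1)] sd_a[OF a(1)] by simp
    moreover have "sd (alph C (sd x)) = sig C (sig C a)" using xa sd_c1[OF a(1)] sd_a[OF a'] aa by simp
    ultimately show ?thesis using sd_d other1[OF a(1)] xa arc_s2[OF a'] by simp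
  next
    assume xa: "x = sig C (sig C a)"
    have e1: "sd (sd x) = alph C a" using xa sd_c2[OF a(1)] sd_c1[OF a'] by simp
    have "sd (sd (alph C (sd (sd x)))) = sig C a"
      using e1 aa sd_a[OF a(1)] sd_c2[OF a'] by simp
    then show ?thesis using sd_d e1 a' other2[OF a(1)] xa by simp
  qed
qed

lemma starts_dual: "starts (dual C) = ends C"
proof -
  have "{(x, other (dual C) x) | x. x \<in> circ_darts C} = {(x, surg C x) | x. x \<in> circ_darts C}"
    unfolding Setcompr_eq_image by (rule image_cong[OF refl]) (simp add: other_dual circ_def)
  then show ?thesis unfolding starts_def ends_def start_circ_def end_circ_def by simp
qed

lemma ends_dual: "ends (dual C) = starts C"
proof -
  have "{(x, surg (dual C) x) | x. x \<in> circ_darts C} = {(x, other C x) | x. x \<in> circ_darts C}"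
    unfolding Setcompr_eq_image by (rule image_cong[OF refl]) (simp add: surg_dual circ_def)
  then show ?thesis unfolding starts_def ends_def start_circ_def end_circ_def by simp
qed

definition swp where "swp d = (if d \<in> arcs C then alph C d else d)"

lemma iso_dd: "conf_iso swp (dual (dual C)) C"
proof -
  have sdd: "sig (dual (dual C)) d = (if d \<in> arcs C then sd (sd (alph C d))
      else if sd (sd d) \<in> arcs C then sd (sd d) else sd (alph C (sd d)))" for d
    unfolding dual_sig[of "dual C"] sd_def by simp
  have swD: "swp d \<in> darts C" if "d \<in> darts C" for d using that alar arD unfolding swp_def by auto
  have swsw: "swp (swp d) = d" if "d \<in> darts C" for d
    using that alar alal_arc unfolding swp_def by auto
  have bij: "bij_betw swp (darts C) (darts C)"
  proof -
    have inj: "inj_on swp (darts C)" by (rule inj_onI) (metis swsw)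
    have "darts C \<subseteq> swp ` darts C" using swsw swD by (metis image_eqI subsetI)
    then show ?thesis using inj swD unfolding bij_betw_def by blast
  qed
  have main: "swp (alph C d) = alph C (swp d) \<and> swp (sig (dual (dual C)) d) = sig C (swp d)
      \<and> (d \<in> arcs C \<longleftrightarrow> swp d \<in> arcs C)" if d: "d \<in> darts C" for d
  proof -
    obtain a where a: "a \<in> arcs C" "d = a \<or> d = sig C a \<or> d = sig C (sig C a)" using dart_form d by blast
    have a': "alph C a \<in> arcs C" using alar a by blast
    have aa: "alph C (alph C a) = a" using alal_arc a by blast
    have nc: "sig C a \<notin> arcs C" "sig C (sig C a) \<notin> arcs C" "sig C (alph C a) \<notin> arcs C"
      "sig C (sig C (alph C a)) \<notin> arcs C" using arc_s1 arc_s2 a a' by auto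
    have p1: "swp (alph C d) = alph C (swp d)"
    proof (cases "d \<in> arcs C")
      case True then show ?thesis unfolding swp_def using alar alal_arc by simp
    next
      case False
      then have "alph C d \<notin> arcs C" using alar alal d by metis
      then show ?thesis unfolding swp_def using False by simp
    qed
    have p3: "d \<in> arcs C \<longleftrightarrow> swp d \<in> arcs C" unfolding swp_def using alar alal d by metis
    have p2: "swp (sig (dual (dual C)) d) = sig C (swp d)"
      using a(2)
    proof (elim disjE)
      assume da: "d = a"
      have "sig (dual (dual C)) d = sig C (alph C a)"
        using sdd da a sd_a[OF a'] aa sd_c2[OF a(1)] by simp
      then show ?thesis unfolding swp_def using da a nc by simp
    next
      assume da: "d = sig C a"
      have "sd (sd d) = sig C (sig C (alph C a))" using da sd_c1[OF a(1)] sd_a[OF a(1)] by simp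
      moreover have "sd (alph C (sd d)) = sig C (sig C a)" using da sd_c1[OF a(1)] sd_a[OF a'] aa by simp
      ultimately have "sig (dual (dual C)) d = sig C (sig C a)" using sdd da nc by simp
      then show ?thesis unfolding swp_def using da nc by simp
    next
      assume da: "d = sig C (sig C a)"
      have "sd (sd d) = alph C a" using da sd_c2[OF a(1)] sd_c1[OF a'] by simp
      then have "sig (dual (dual C)) d = alph C a" using sdd da nc a' by simp
      moreover have "sig C (sig C (sig C a)) = a" using s3 a arD by blast
      ultimately show ?thesis unfolding swp_def using da nc a' aa by simp
    qed
    show ?thesis using p1 p2 p3 by blast
  qed
  show ?thesis unfolding conf_iso_def dual_darts dual_alph dual_arcs using bij main by blast
qed

lemma dual_tree:
  assumes "card (ends C) = dim C + 1" and "card (starts C) = 1"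
  shows "is_dual_tree C"
proof -
  have "is_tree (dual C)"
    unfolding is_tree_def using conn_dual starts_dual ends_dual assms by simp
  then show ?thesis unfolding is_dual_tree_def using iso_dd by blast
qed

end

theorem theorem3p4:
  fixes F :: "'d family" and C :: "'d rconf" and p :: int
  assumes "naturality_rule F" and "duality_rule F" and "filtration_rule F"
    and "conn_config C" and "\<not> is_tree C" and "\<not> is_dual_tree C"
    and "has_bidegree F C p" and "p \<ge> 2 * int (dim C)"
  shows "\<forall>a b. a \<subseteq> starts C \<longrightarrow> b \<subseteq> ends C \<longrightarrow> F C a b = 0"
proof (intro allI impI)
  interpret c: cc C using assms(4) by unfold_locales
  fix a b assume aS: "a \<subseteq> starts C" and bE: "b \<subseteq> ends C"
  show "F C a b = 0"
  proof (rule ccontr)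
    assume nz: "F C a b \<noteq> 0"
    have filt: "\<And>d. d \<in> circ_darts C \<Longrightarrow> start_circ C d \<in> a \<Longrightarrow> end_circ C d \<in> b"
      using assms(3) assms(4) aS bE nz unfolding filtration_rule_def by blast
    have gr: "gr1 C b = gr0 C a + p" using assms(7) aS bE nz unfolding has_bidegree_def by blast
    have finS: "finite (starts C)" unfolding starts_def using c.circ_fin c.circ_def by simp
    have finE: "finite (ends C)" unfolding ends_def using c.circ_fin c.circ_def by simp
    have finb: "finite b" using finE bE finite_subset by blast
    have cardA: "card a \<le> card (starts C)" using card_mono[OF finS aS] .
    have eb: "card (starts C) + card (ends C) \<le> dim C + 2" using c.euler_bound .
    have s1: "card (starts C) \<ge> 1" using c.starts_ne .
    have g: "int (card (ends C)) - 2 * int (card b) + int (dim C) = int (card (starts C)) - 2 * int (card a) + p"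
      using gr unfolding gr0_def gr1_def by simp
    show False
    proof (cases "a = {}")
      case True
      then have "card a = 0" by simp
      then have "card (starts C) = 1" "card (ends C) = dim C + 1" using g eb s1 assms(8) by linarith+
      then have "is_dual_tree C" using c.dual_tree by blast
      then show False using assms(6) by blast
    next
      case False
      then obtain x where x: "x \<in> a" by blast
      then obtain d where d: "d \<in> circ_darts C" "x = start_circ C d" using aS unfolding starts_def by blast
      have "end_circ C d \<in> b" using filt d x by blast
      then have b1: "card b \<ge> 1" using finb by (metis One_nat_def Suc_leI card_gt_0_iff empty_iff)
      have eqs: "card a = card (starts C)" "card b = 1" "card (starts C) + card (ends C) = dim C + 2"
        using g eb cardA b1 assms(8) by linarith+
      have aeq: "a = starts C" using card_subset_eq[OF finS aS eqs(1)] .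
      have "ends C \<subseteq> b"
      proof
        fix y assume "y \<in> ends C"
        then obtain d where d: "d \<in> circ_darts C" "y = end_circ C d" unfolding ends_def by blast
        have "start_circ C d \<in> a" using d aeq unfolding starts_def by blast
        then show "y \<in> b" using filt d by blast
      qed
      then have "ends C = b" using bE by (rule subset_antisym)
      then have "card (ends C) = 1" using eqs(2) by simp
      then have "is_tree C" unfolding is_tree_def using assms(4) eqs(3) by simp
      then show False using assms(5) by blast
    qed
  qed
qed

end
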